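(* Let $\mathbb F$ be an algebraically closed field of characteristic $p\neq 2$, let $S=\{R_0,\dots,R_d\}$ be a quasi-thin scheme on $X$ with $\mathcal A_2=\{a\in\{0,\dots,d\}:k_a=2\}\neq\varnothing$, let $x\in X$ and $\mathcal T=\mathcal T(x)$. Define the relation $\sim$ on $\mathcal A_2$ by $b\sim c$ if and only if $|R_{b'}R_c|=2$ or $(b,c)$ is a bad pair of $S$ (this is an equivalence relation), and let $\mathcal C_0,\dots,\mathcal C_\gamma$ be its distinct equivalence classes. Then $\mathcal T\cong M_{d+1}(\mathbb F)\oplus\bigoplus_{a=0}^{\gamma}M_{|\mathcal C_a|}(\mathbb F)$ as $\mathbb F$-algebras, where $M_n(\mathbb F)$ is the algebra of $n\times n$ matrices over $\mathbb F$.
   Context: Let $X$ be a nonempty finite set. A scheme of class $d$ on $X$ is a partition $S=\{R_0,\dots,R_d\}$ of $X\times X$ into nonempty sets such that $R_0=\{(b,b):b\in X\}$; for each $c$ there is $c'$ with $R_{c'}=\{(f,e):(e,f)\in R_c\}$; and for all $i,j,k$ the intersection number $p_{ij}^k=|\{\ell\in X:(m,\ell)\in R_i,(\ell,n)\in R_j\}|$ does not depend on $(m,n)\in R_k$. The valency is $k_a=p_{aa'}^0$; quasi-thin means all $k_a\le 2$; complex product $R_aR_b=\{R_c:p_{ab}^c>0\}$. For $y\in X$, $yR_a=\{z:(y,z)\in R_a\}$; $A_a\in M_X(\mathbb F)$ is the $(0,1)$ adjacency matrix of $R_a$, $E_a^*(y)$ is the diagonal $(0,1)$-matrix with ones exactly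 at positions indexed by $yR_a$, and $\mathcal T(y)$ is the $\mathbb F$-subalgebra of $M_X(\mathbb F)$ generated by $A_0,\dots,A_d,E_0^*(y),\dots,E_d^*(y)$. Bad pair: $(u,v)$ is a bad pair of $S$ if there exist an integer $a\ge1$ and $R_{i_b},R_{j_b},R_{\ell_b}\in S$ ($b=0,\dots,a$) with $i_0=u$, $\ell_a=v$, $k_{i_b}=k_{\ell_b}=2$ and $p_{i_bj_b}^{\ell_b}=1$ for all $b$, $\ell_c=i_{c+1}$ for $0\le c\le a-1$, and $|R_{u'}R_v|=1$. *)

theory Defs
  imports "HOL-Computational_Algebra.Polynomial"
begin

definition alg_closed_field :: "'f::field itself \<Rightarrow> bool" where
  "alg_closed_field _ \<longleftrightarrow> (\<forall>q::'f poly. degree q > 0 \<longrightarrow> (\<exists>z. poly q z = 0))"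

definition int_num_at :: "'a set \<Rightarrow> (nat \<Rightarrow> ('a \<times> 'a) set) \<Rightarrow> nat \<Rightarrow> nat \<Rightarrow> 'a \<Rightarrow> 'a \<Rightarrow> nat" where
  "int_num_at X R i j m n = card {l \<in> X. (m, l) \<in> R i \<and> (l, n) \<in> R j}"

definition is_scheme :: "'a set \<Rightarrow> nat \<Rightarrow> (nat \<Rightarrow> ('a \<times> 'a) set) \<Rightarrow> bool" where
  "is_scheme X d R \<longleftrightarrow>
     finite X \<and> X \<noteq> {} \<and>
     (\<forall>i\<le>d. R i \<noteq> {}) \<and>
     (\<forall>i\<le>d. \<forall>j\<le>d. i \<noteq> j \<longrightarrow> R i \<inter> R j = {}) \<and>
     (\<Union>i\<le>d. R i) = X \<times> X \<and>
     R 0 = {(b, b) | b. b \<in> X} \<and>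
     (\<forall>c\<le>d. \<exists>c'\<le>d. R c' = {(f, e). (e, f) \<in> R c}) \<and>
     (\<forall>i\<le>d. \<forall>j\<le>d. \<forall>k\<le>d. \<forall>m n m2 n2. (m, n) \<in> R k \<longrightarrow> (m2, n2) \<in> R k \<longrightarrow>
        int_num_at X R i j m n = int_num_at X R i j m2 n2)"

text \<open>Intersection number p_{ij}^k (evaluated at some pair of R k).\<close>
definition int_num :: "'a set \<Rightarrow> (nat \<Rightarrow> ('a \<times> 'a) set) \<Rightarrow> nat \<Rightarrow> nat \<Rightarrow> nat \<Rightarrow> nat" where
  "int_num X R i j k = (let (m, n) = (SOME mn. mn \<in> R k) in int_num_at X R i j m n)"

definition conj_idx :: "nat \<Rightarrow> (nat \<Rightarrow> ('a \<times> 'a) set) \<Rightarrow> nat \<Rightarrow> nat" where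
  "conj_idx d R c = (THE c'. c' \<le> d \<and> R c' = {(f, e). (e, f) \<in> R c})"

definition valency :: "'a set \<Rightarrow> nat \<Rightarrow> (nat \<Rightarrow> ('a \<times> 'a) set) \<Rightarrow> nat \<Rightarrow> nat" where
  "valency X d R a = int_num X R a (conj_idx d R a) 0"

definition quasi_thin :: "'a set \<Rightarrow> nat \<Rightarrow> (nat \<Rightarrow> ('a \<times> 'a) set) \<Rightarrow> bool" where
  "quasi_thin X d R \<longleftrightarrow> (\<forall>a\<le>d. valency X d R a \<le> 2)"

text \<open>Complex product R_a R_b, represented by the set of indices c with p_{ab}^c > 0
  (the relations R c are pairwise distinct, so this has the same cardinality).\<close>
definition cplx_prod :: "'a set \<Rightarrow> nat \<Rightarrow> (nat \<Rightarrow> ('a \<times> 'a) set) \<Rightarrow> nat \<Rightarrow> nat \<Rightarrow> nat set" where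
  "cplx_prod X d R a b = {c. c \<le> d \<and> int_num X R a b c > 0}"

definition bad_pair :: "'a set \<Rightarrow> nat \<Rightarrow> (nat \<Rightarrow> ('a \<times> 'a) set) \<Rightarrow> nat \<Rightarrow> nat \<Rightarrow> bool" where
  "bad_pair X d R u v \<longleftrightarrow>
     (\<exists>a::nat. a \<ge> 1 \<and> (\<exists>i j l :: nat \<Rightarrow> nat.
        (\<forall>b\<le>a. i b \<le> d \<and> j b \<le> d \<and> l b \<le> d) \<and>
        i 0 = u \<and> l a = v \<and>
        (\<forall>b\<le>a. valency X d R (i b) = 2 \<and> valency X d R (l b) = 2 \<and>
                int_num X R (i b) (j b) (l b) = 1) \<and>
        (\<forall>c<a. l c = i (Suc c)) \<and>
        card (cplx_prod X d R (conj_idx d R u) v) = 1))"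

definition A2 :: "'a set \<Rightarrow> nat \<Rightarrow> (nat \<Rightarrow> ('a \<times> 'a) set) \<Rightarrow> nat set" where
  "A2 X d R = {a. a \<le> d \<and> valency X d R a = 2}"

definition sim_rel :: "'a set \<Rightarrow> nat \<Rightarrow> (nat \<Rightarrow> ('a \<times> 'a) set) \<Rightarrow> nat rel" where
  "sim_rel X d R = {(b, c). b \<in> A2 X d R \<and> c \<in> A2 X d R \<and>
      (card (cplx_prod X d R (conj_idx d R b) c) = 2 \<or> bad_pair X d R b c)}"

type_synonym ('a, 'f) xmat = "'a \<Rightarrow> 'a \<Rightarrow> 'f"

definition xmat_mult :: "'a set \<Rightarrow> ('a, 'f::field) xmat \<Rightarrow> ('a, 'f) xmat \<Rightarrow> ('a, 'f) xmat" where
  "xmat_mult X A B = (\<lambda>y z. \<Sum>w\<in>X. A y w * B w z)"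

definition xmat_one :: "'a set \<Rightarrow> ('a, 'f::field) xmat" where
  "xmat_one X = (\<lambda>y z. if y \<in> X \<and> y = z then 1 else 0)"

definition adj_mat :: "(nat \<Rightarrow> ('a \<times> 'a) set) \<Rightarrow> nat \<Rightarrow> ('a, 'f::field) xmat" where
  "adj_mat R a = (\<lambda>y z. if (y, z) \<in> R a then 1 else 0)"

definition dual_idem :: "(nat \<Rightarrow> ('a \<times> 'a) set) \<Rightarrow> 'a \<Rightarrow> nat \<Rightarrow> ('a, 'f::field) xmat" where
  "dual_idem R x a = (\<lambda>y z. if y = z \<and> (x, y) \<in> R a then 1 else 0)"

inductive_set gen_alg :: "'a set \<Rightarrow> ('a, 'f::field) xmat set \<Rightarrow> ('a, 'f) xmat set"
  for X G where
    gen: "A \<in> G \<Longrightarrow> A \<in> gen_alg X G"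
  | one: "xmat_one X \<in> gen_alg X G"
  | zero: "(\<lambda>y z. 0) \<in> gen_alg X G"
  | add: "A \<in> gen_alg X G \<Longrightarrow> B \<in> gen_alg X G \<Longrightarrow> (\<lambda>y z. A y z + B y z) \<in> gen_alg X G"
  | smult: "A \<in> gen_alg X G \<Longrightarrow> (\<lambda>y z. c * A y z) \<in> gen_alg X G"
  | mult: "A \<in> gen_alg X G \<Longrightarrow> B \<in> gen_alg X G \<Longrightarrow> xmat_mult X A B \<in> gen_alg X G"

definition terwilliger_alg :: "'a set \<Rightarrow> nat \<Rightarrow> (nat \<Rightarrow> ('a \<times> 'a) set) \<Rightarrow> 'a \<Rightarrow> ('a, 'f::field) xmat set" where
  "terwilliger_alg X d R x =
     gen_alg X ((\<lambda>a. adj_mat R a) ` {..d} \<union> (\<lambda>a. dual_idem R x a) ` {..d})"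

text \<open>Direct sum of M_{n k}(F) over k in a finite index set I: families of matrices
  B k i j (block k, row i, column j), zero outside the blocks.\<close>
definition blocks_carrier :: "'i set \<Rightarrow> ('i \<Rightarrow> nat) \<Rightarrow> ('i \<Rightarrow> nat \<Rightarrow> nat \<Rightarrow> 'f::field) set" where
  "blocks_carrier I n = {B. \<forall>k i j. B k i j \<noteq> 0 \<longrightarrow> k \<in> I \<and> i < n k \<and> j < n k}"

definition blocks_mult :: "('i \<Rightarrow> nat) \<Rightarrow> ('i \<Rightarrow> nat \<Rightarrow> nat \<Rightarrow> 'f::field) \<Rightarrow> ('i \<Rightarrow> nat \<Rightarrow> nat \<Rightarrow> 'f) \<Rightarrow> ('i \<Rightarrow> nat \<Rightarrow> nat \<Rightarrow> 'f)" where
  "blocks_mult n B C = (\<lambda>k i j. \<Sum>l<n k. B k i l * C k l j)"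

definition blocks_one :: "'i set \<Rightarrow> ('i \<Rightarrow> nat) \<Rightarrow> ('i \<Rightarrow> nat \<Rightarrow> nat \<Rightarrow> 'f::field)" where
  "blocks_one I n = (\<lambda>k i j. if k \<in> I \<and> i < n k \<and> i = j then 1 else 0)"

definition alg_iso :: "'a set \<Rightarrow> ('a, 'f::field) xmat set \<Rightarrow> 'i set \<Rightarrow> ('i \<Rightarrow> nat)
    \<Rightarrow> (('a, 'f) xmat \<Rightarrow> ('i \<Rightarrow> nat \<Rightarrow> nat \<Rightarrow> 'f)) \<Rightarrow> bool" where
  "alg_iso X T I n \<phi> \<longleftrightarrow>
     bij_betw \<phi> T (blocks_carrier I n) \<and>
     (\<forall>A\<in>T. \<forall>B\<in>T. \<phi> (\<lambda>y z. A y z + B y z) = (\<lambda>k i j. \<phi> A k i j + \<phi> B k i j)) \<and>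
     (\<forall>A\<in>T. \<forall>c. \<phi> (\<lambda>y z. c * A y z) = (\<lambda>k i j. c * \<phi> A k i j)) \<and>
     (\<forall>A\<in>T. \<forall>B\<in>T. \<phi> (xmat_mult X A B) = blocks_mult n (\<phi> A) (\<phi> B)) \<and>
     \<phi> (xmat_one X) = blocks_one I n"

end

theory Submission
  imports Defs
begin


locale qt =
  fixes X :: "'a set" and d :: nat and R :: "nat \<Rightarrow> ('a \<times> 'a) set" and x :: 'a
  assumes sch: "is_scheme X d R" and qth: "quasi_thin X d R" and xX: "x \<in> X"
begin

lemma sch_all: "finite X \<and> X \<noteq> {} \<and> (\<forall>i\<le>d. R i \<noteq> {}) \<and>
  (\<forall>i\<le>d. \<forall>j\<le>d. i \<noteq> j \<longrightarrow> R i \<inter> R j = {}) \<and>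
  (\<Union>i\<le>d. R i) = X \<times> X \<and> R 0 = {(b, b) | b. b \<in> X} \<and>
  (\<forall>c\<le>d. \<exists>c'\<le>d. R c' = {(f, e). (e, f) \<in> R c}) \<and>
  (\<forall>i\<le>d. \<forall>j\<le>d. \<forall>k\<le>d. \<forall>m n m2 n2. (m, n) \<in> R k \<longrightarrow> (m2, n2) \<in> R k \<longrightarrow>
        int_num_at X R i j m n = int_num_at X R i j m2 n2)"
  using sch unfolding is_scheme_def .
lemmas sch_parts = sch_all[THEN conjunct1] sch_all[THEN conjunct2, THEN conjunct1]
  sch_all[THEN conjunct2, THEN conjunct2, THEN conjunct1]
  sch_all[THEN conjunct2, THEN conjunct2, THEN conjunct2, THEN conjunct1]
  sch_all[THEN conjunct2, THEN conjunct2, THEN conjunct2, THEN conjunct2, THEN conjunct1]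
  sch_all[THEN conjunct2, THEN conjunct2, THEN conjunct2, THEN conjunct2, THEN conjunct2, THEN conjunct1]
  sch_all[THEN conjunct2, THEN conjunct2, THEN conjunct2, THEN conjunct2, THEN conjunct2, THEN conjunct2, THEN conjunct1]
  sch_all[THEN conjunct2, THEN conjunct2, THEN conjunct2, THEN conjunct2, THEN conjunct2, THEN conjunct2, THEN conjunct2]

lemma finX: "finite X" using sch_parts(1) .
lemma Rne: "i \<le> d \<Longrightarrow> R i \<noteq> {}" using sch_parts(3) by simp
lemma Rdisj: "i \<le> d \<Longrightarrow> j \<le> d \<Longrightarrow> i \<noteq> j \<Longrightarrow> R i \<inter> R j = {}"
  using sch_parts(4) by simp
lemma Rcover: "(\<Union>i\<le>d. R i) = X \<times> X" using sch_parts(5) .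
lemma R0: "R 0 = {(b, b) | b. b \<in> X}" using sch_parts(6) .
lemma conv_ex: "c \<le> d \<Longrightarrow> \<exists>c'\<le>d. R c' = {(f, e). (e, f) \<in> R c}"
  using sch_parts(7) by simp
lemma reg: "i\<le>d \<Longrightarrow> j\<le>d \<Longrightarrow> k\<le>d \<Longrightarrow> (m,n)\<in>R k \<Longrightarrow> (m2,n2)\<in>R k \<Longrightarrow>
   int_num_at X R i j m n = int_num_at X R i j m2 n2"
  using sch_parts(8) by blast

lemma Rsub: "i \<le> d \<Longrightarrow> R i \<subseteq> X \<times> X" using Rcover by blast
lemma RX1: "i \<le> d \<Longrightarrow> (y,z) \<in> R i \<Longrightarrow> y \<in> X" using Rsub by blast
lemma RX2: "i \<le> d \<Longrightarrow> (y,z) \<in> R i \<Longrightarrow> z \<in> X" using Rsub by blast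
lemma rel_ex: "y\<in>X \<Longrightarrow> z\<in>X \<Longrightarrow> \<exists>i\<le>d. (y,z)\<in>R i" using Rcover by blast
lemma rel_uniq: "i\<le>d \<Longrightarrow> j\<le>d \<Longrightarrow> (y,z)\<in>R i \<Longrightarrow> (y,z)\<in>R j \<Longrightarrow> i = j"
  using Rdisj by blast
lemma R0_iff: "(y,z) \<in> R 0 \<longleftrightarrow> y \<in> X \<and> z = y" using R0 by auto

lemma conj: assumes "c \<le> d"
  shows "conj_idx d R c \<le> d \<and> R (conj_idx d R c) = {(f, e). (e, f) \<in> R c}"
proof -
  obtain c' where c': "c' \<le> d" "R c' = {(f, e). (e, f) \<in> R c}" using conv_ex[OF assms] by blast
  have uniq: "c'' = c'" if h1: "c'' \<le> d" and h2: "R c'' = {(f, e). (e, f) \<in> R c}" for c''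
  proof (rule ccontr)
    assume ne: "c'' \<noteq> c'"
    have "R c'' \<inter> R c' = {}" using h1 c'(1) ne by (rule Rdisj)
    then have "R c' = {}" using h2 c'(2) by simp
    then show False using Rne c'(1) by blast
  qed
  have "conj_idx d R c = c'" unfolding conj_idx_def
  proof (rule the_equality)
    show "c' \<le> d \<and> R c' = {(f, e). (e, f) \<in> R c}" using c' by blast
    show "\<And>c''. c'' \<le> d \<and> R c'' = {(f, e). (e, f) \<in> R c} \<Longrightarrow> c'' = c'" using uniq by blast
  qed
  then show ?thesis using c' by simp
qed

abbreviation cj where "cj c \<equiv> conj_idx d R c"

lemma cj_le: "c \<le> d \<Longrightarrow> cj c \<le> d" using conj by blast
lemma cj_mem: "c \<le> d \<Longrightarrow> (y,z) \<in> R (cj c) \<longleftrightarrow> (z,y) \<in> R c" using conj by blast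

lemma int_num_eq: "k \<le> d \<Longrightarrow> (m,n) \<in> R k \<Longrightarrow> i\<le>d \<Longrightarrow> j\<le>d \<Longrightarrow>
   int_num X R i j k = int_num_at X R i j m n"
proof -
  assume a: "k \<le> d" "(m,n) \<in> R k" "i\<le>d" "j\<le>d"
  obtain m' n' where e: "(SOME mn. mn \<in> R k) = (m', n')" by (cases "SOME mn. mn \<in> R k")
  have "(SOME mn. mn \<in> R k) \<in> R k" using a(2) by (rule someI)
  then have "(m',n') \<in> R k" using e by simp
  moreover have "int_num X R i j k = int_num_at X R i j m' n'" unfolding int_num_def e by simp
  ultimately show ?thesis using reg[OF a(3,4,1) _ a(2)] by metis
qed

definition N where "N a = {y. (x,y) \<in> R a}"

lemma N_sub: "a \<le> d \<Longrightarrow> N a \<subseteq> X" unfolding N_def using RX2 by blast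
lemma finN: "a \<le> d \<Longrightarrow> finite (N a)" using N_sub finX finite_subset by blast

lemma xx0: "(x,x) \<in> R 0" using R0_iff xX by auto

lemma valency_card: assumes "a \<le> d" shows "valency X d R a = card (N a)"
proof -
  have "valency X d R a = int_num_at X R a (cj a) x x"
    unfolding valency_def using int_num_eq[OF _ xx0] assms cj_le by auto
  also have "\<dots> = card (N a)" unfolding int_num_at_def N_def
    using assms cj_mem[OF assms] RX2[OF assms]
    by (intro arg_cong[where f=card]) auto
  finally show ?thesis .
qed

lemma card_N_pos: assumes "a \<le> d" shows "card (N a) \<ge> 1"
proof -
  obtain m n where mn: "(m,n) \<in> R a" using Rne[OF assms] by auto
  have m: "m \<in> X" using RX1[OF assms mn] .
  have "int_num_at X R a (cj a) m m = int_num_at X R a (cj a) x x"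
    using reg[of a "cj a" 0 m m x x, OF assms cj_le[OF assms] _ _ xx0] m R0_iff by blast
  moreover have "int_num_at X R a (cj a) x x = card (N a)" unfolding int_num_at_def N_def
    using assms cj_mem[OF assms] RX2[OF assms]
    by (intro arg_cong[where f=card]) auto
  moreover have "int_num_at X R a (cj a) m m \<ge> 1"
  proof -
    have "n \<in> {l \<in> X. (m, l) \<in> R a \<and> (l, m) \<in> R (cj a)}"
      using mn cj_mem[OF assms] RX2[OF assms mn] by auto
    moreover have "finite {l \<in> X. (m, l) \<in> R a \<and> (l, m) \<in> R (cj a)}" using finX by simp
    ultimately have "card {l \<in> X. (m, l) \<in> R a \<and> (l, m) \<in> R (cj a)} > 0"
      using card_gt_0_iff by blast
    then show ?thesis unfolding int_num_at_def by simp
  qed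
  ultimately show ?thesis by simp
qed

lemma card_N_le2: "a \<le> d \<Longrightarrow> card (N a) \<le> 2"
  using qth valency_card unfolding quasi_thin_def by auto

lemma N_ne: "a \<le> d \<Longrightarrow> N a \<noteq> {}" using card_N_pos by fastforce

lemma N_part: "y \<in> X \<Longrightarrow> \<exists>a\<le>d. y \<in> N a" unfolding N_def using rel_ex xX by blast
lemma N_disj: "a\<le>d \<Longrightarrow> b\<le>d \<Longrightarrow> y \<in> N a \<Longrightarrow> y \<in> N b \<Longrightarrow> a = b"
  unfolding N_def using rel_uniq by blast

lemma A2_iff: "a \<in> A2 X d R \<longleftrightarrow> a \<le> d \<and> card (N a) = 2"
  unfolding A2_def using valency_card by auto

lemma card1_or2: "a \<le> d \<Longrightarrow> card (N a) = 1 \<or> a \<in> A2 X d R"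
  using card_N_pos card_N_le2 A2_iff by fastforce

lemma row_count: assumes "a\<le>d" "b\<le>d" "c\<le>d" "y \<in> N a"
  shows "card {z \<in> N c. (y,z) \<in> R b} = int_num X R c (cj b) a"
proof -
  have "(x,y) \<in> R a" using assms N_def by auto
  then have "int_num X R c (cj b) a = int_num_at X R c (cj b) x y"
    using int_num_eq assms cj_le by auto
  also have "\<dots> = card {z \<in> N c. (y,z) \<in> R b}" unfolding int_num_at_def N_def
    using cj_mem[OF assms(2)] RX2[OF assms(3)] by (intro arg_cong[where f=card]) auto
  finally show ?thesis by simp
qed

lemma col_count: assumes "a\<le>d" "b\<le>d" "c\<le>d" "z \<in> N c"
  shows "card {y \<in> N a. (y,z) \<in> R b} = int_num X R a b c"
proof -
  have "(x,z) \<in> R c" using assms N_def by auto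
  then have "int_num X R a b c = int_num_at X R a b x z"
    using int_num_eq assms by auto
  also have "\<dots> = card {y \<in> N a. (y,z) \<in> R b}" unfolding int_num_at_def N_def
    using RX2[OF assms(1)] by (intro arg_cong[where f=card]) auto
  finally show ?thesis by simp
qed

lemma double_count: assumes "a\<le>d" "b\<le>d" "c\<le>d"
  shows "card (N a) * int_num X R c (cj b) a = card (N c) * int_num X R a b c"
proof -
  let ?S = "SIGMA y:N a. {z \<in> N c. (y,z) \<in> R b}"
  let ?S' = "SIGMA z:N c. {y \<in> N a. (y,z) \<in> R b}"
  have "card ?S = (\<Sum>y\<in>N a. card {z \<in> N c. (y,z) \<in> R b})"
    using finN assms by simp
  also have "\<dots> = (\<Sum>y\<in>N a. int_num X R c (cj b) a)" using row_count assms by simp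
  finally have 1: "card ?S = card (N a) * int_num X R c (cj b) a" by simp
  have "card ?S' = (\<Sum>z\<in>N c. card {y \<in> N a. (y,z) \<in> R b})"
    using finN assms by simp
  also have "\<dots> = (\<Sum>z\<in>N c. int_num X R a b c)" using col_count assms by simp
  finally have 2: "card ?S' = card (N c) * int_num X R a b c" by simp
  have "?S = (\<lambda>(z,y). (y,z)) ` ?S'" by auto
  moreover have "inj_on (\<lambda>(z,y). (y,z)) ?S'" by (auto simp: inj_on_def)
  ultimately have "card ?S = card ?S'" by (simp add: card_image)
  then show ?thesis using 1 2 by simp
qed

end


context qt
begin

abbreviation A where "A \<equiv> A2 X d R"

lemma A2_le: "a \<in> A \<Longrightarrow> a \<le> d" unfolding A2_def by simp
lemma A2_card: "a \<in> A \<Longrightarrow> card (N a) = 2" using A2_iff by blast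

definition yA where "yA a = fst (SOME p. N a = {fst p, snd p} \<and> fst p \<noteq> snd p)"
definition yB where "yB a = snd (SOME p. N a = {fst p, snd p} \<and> fst p \<noteq> snd p)"

lemma yAB: assumes "a \<in> A" shows "N a = {yA a, yB a}" "yA a \<noteq> yB a"
proof -
  obtain p q where "N a = {p, q}" "p \<noteq> q" using A2_card[OF assms] card_2_iff by metis
  then have "\<exists>pq. N a = {fst pq, snd pq} \<and> fst pq \<noteq> snd pq" by (intro exI[of _ "(p,q)"]) simp
  then have "N a = {fst (SOME pq. N a = {fst pq, snd pq} \<and> fst pq \<noteq> snd pq), snd (SOME pq. N a = {fst pq, snd pq} \<and> fst pq \<noteq> snd pq)} \<and>
     fst (SOME pq. N a = {fst pq, snd pq} \<and> fst pq \<noteq> snd pq) \<noteq> snd (SOME pq. N a = {fst pq, snd pq} \<and> fst pq \<noteq> snd pq)"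
    by (rule someI_ex)
  then show "N a = {yA a, yB a}" "yA a \<noteq> yB a" unfolding yA_def yB_def by blast+
qed

lemma yA_N: "a \<in> A \<Longrightarrow> yA a \<in> N a" using yAB by blast
lemma yB_N: "a \<in> A \<Longrightarrow> yB a \<in> N a" using yAB by blast

lemma A2_cnt: assumes "a \<in> A" "c \<in> A" "b \<le> d"
  shows "int_num X R c (cj b) a = int_num X R a b c"
  using double_count[of a b c] assms A2_le A2_card by simp

lemma rowA: assumes "a \<in> A" "c \<in> A" "b \<le> d" "y \<in> N a"
  shows "card {z \<in> N c. (y,z) \<in> R b} = int_num X R a b c"
  using row_count[of a b c y] A2_cnt assms A2_le by simp

lemma colA: assumes "a \<in> A" "c \<in> A" "b \<le> d" "z \<in> N c"
  shows "card {y \<in> N a. (y,z) \<in> R b} = int_num X R a b c"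
  using col_count[of a b c z] assms A2_le by simp

definition edge where "edge a c \<longleftrightarrow> a \<in> A \<and> c \<in> A \<and> (\<exists>j\<le>d. int_num X R a j c = 1)"
definition Ed where "Ed = {(a,c). edge a c}"
definition conn where "conn a c \<longleftrightarrow> a \<in> A \<and> c \<in> A \<and> (a,c) \<in> Ed\<^sup>*"

lemma edge_sym: assumes "edge a c" shows "edge c a"
proof -
  obtain j where j: "j \<le> d" "int_num X R a j c = 1" "a \<in> A" "c \<in> A" using assms edge_def by blast
  have "int_num X R c (cj j) a = 1" using A2_cnt[of a c j] j by simp
  then show ?thesis unfolding edge_def using j cj_le by blast
qed

lemma int_num_refl: assumes "a \<in> A" shows "int_num X R a 0 a = 1"
proof -
  obtain z where z: "z \<in> N a" using yA_N assms by blast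
  have "{y \<in> N a. (y,z) \<in> R 0} = {z}" using z R0_iff N_sub[OF A2_le[OF assms]] by auto
  then show ?thesis using colA[OF assms assms le0 z] by simp
qed

lemma edge_refl: "a \<in> A \<Longrightarrow> edge a a" unfolding edge_def using int_num_refl by blast

lemma Ed_sym: "sym (Ed\<^sup>*)"
proof -
  have "sym Ed" unfolding sym_def Ed_def using edge_sym by blast
  then show ?thesis by (rule sym_rtrancl)
qed

lemma Ed_A: "(a,c) \<in> Ed \<Longrightarrow> a \<in> A \<and> c \<in> A" unfolding Ed_def edge_def by blast

lemma conn_refl: "a \<in> A \<Longrightarrow> conn a a" unfolding conn_def by blast
lemma conn_sym: "conn a c \<Longrightarrow> conn c a" unfolding conn_def using Ed_sym unfolding sym_def by blast
lemma conn_trans: assumes "conn a b" "conn b c" shows "conn a c"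
proof -
  have "(a,b) \<in> Ed\<^sup>*" "(b,c) \<in> Ed\<^sup>*" "a \<in> A" "c \<in> A" using assms unfolding conn_def by auto
  then show ?thesis unfolding conn_def using rtrancl_trans[of a b Ed c] by simp
qed
lemma edge_conn: "edge a c \<Longrightarrow> conn a c" unfolding conn_def Ed_def edge_def by blast

lemma cp_char: assumes "b \<in> A" "c \<in> A"
  shows "cplx_prod X d R (cj b) c = {e. e \<le> d \<and> (\<exists>y\<in>N b. \<exists>z\<in>N c. (y,z) \<in> R e)}"
proof (intro set_eqI iffI)
  fix e assume "e \<in> cplx_prod X d R (cj b) c"
  then have e: "e \<le> d" "int_num X R (cj b) c e > 0" unfolding cplx_prod_def by auto
  have bd: "b \<le> d" and cd: "c \<le> d" using assms A2_le by auto
  obtain m n where mn: "(m,n) \<in> R e" using Rne[OF e(1)] by auto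
  have "int_num_at X R (cj b) c m n > 0" using e int_num_eq[OF e(1) mn cj_le[OF bd] cd] by simp
  then have "{l \<in> X. (m, l) \<in> R (cj b) \<and> (l, n) \<in> R c} \<noteq> {}" unfolding int_num_at_def
    by (metis card.empty less_irrefl)
  then obtain l where l: "(l,m) \<in> R b" "(l,n) \<in> R c" using cj_mem[OF bd] by blast
  have "int_num X R c (cj e) b = int_num_at X R c (cj e) l m"
    using int_num_eq[OF bd l(1) cd cj_le[OF e(1)]] .
  moreover have "n \<in> {l' \<in> X. (l, l') \<in> R c \<and> (l', m) \<in> R (cj e)}"
    using l mn cj_mem[OF e(1)] RX2[OF cd] by blast
  moreover have "finite {l' \<in> X. (l, l') \<in> R c \<and> (l', m) \<in> R (cj e)}" using finX by simp
  ultimately have pos: "int_num X R c (cj e) b > 0" unfolding int_num_at_def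
    using card_gt_0_iff by fastforce
  obtain y where y: "y \<in> N b" using yA_N assms by blast
  have "card {z \<in> N c. (y,z) \<in> R e} > 0" using row_count[OF bd e(1) cd y] pos by simp
  then obtain z where "z \<in> N c" "(y,z) \<in> R e" by (metis (no_types, lifting) Collect_empty_eq card.empty less_irrefl)
  then show "e \<in> {e. e \<le> d \<and> (\<exists>y\<in>N b. \<exists>z\<in>N c. (y,z) \<in> R e)}" using y e by blast
next
  fix e assume "e \<in> {e. e \<le> d \<and> (\<exists>y\<in>N b. \<exists>z\<in>N c. (y,z) \<in> R e)}"
  then obtain y z where e: "e \<le> d" "y \<in> N b" "z \<in> N c" "(y,z) \<in> R e" by blast
  have bd: "b \<le> d" and cd: "c \<le> d" using assms A2_le by auto
  have "int_num X R (cj b) c e = int_num_at X R (cj b) c y z"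
    using int_num_eq[OF e(1) e(4) cj_le[OF bd] cd] .
  moreover have "x \<in> {l \<in> X. (y, l) \<in> R (cj b) \<and> (l, z) \<in> R c}"
    using e xX cj_mem[OF bd] unfolding N_def by blast
  moreover have "finite {l \<in> X. (y, l) \<in> R (cj b) \<and> (l, z) \<in> R c}" using finX by simp
  ultimately have "int_num X R (cj b) c e > 0" unfolding int_num_at_def
    using card_gt_0_iff by fastforce
  then show "e \<in> cplx_prod X d R (cj b) c" unfolding cplx_prod_def using e by blast
qed

lemma full_row: assumes "b \<in> A" "c \<in> A" "e \<le> d" "y \<in> N b" "int_num X R b e c = 2" "z \<in> N c"
  shows "(y,z) \<in> R e"
proof -
  have "card {z \<in> N c. (y,z) \<in> R e} = card (N c)" using rowA[OF assms(1,2,3,4)] assms(5) A2_card[OF assms(2)] by simp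
  moreover have "finite (N c)" using finN A2_le assms by blast
  ultimately have "{z \<in> N c. (y,z) \<in> R e} = N c"
    by (metis (no_types, lifting) card_subset_eq mem_Collect_eq subsetI)
  then show ?thesis using assms(6) by blast
qed

lemma rel_of: assumes "y \<in> N b" "z \<in> N c" "b \<in> A" "c \<in> A" obtains e where "e \<le> d" "(y,z) \<in> R e"
  using rel_ex N_sub A2_le assms by blast

lemma cnt_le2: assumes "b \<in> A" "c \<in> A" "e \<le> d" shows "int_num X R b e c \<le> 2"
proof -
  have y: "yA b \<in> N b" using yA_N assms by blast
  have "card {z \<in> N c. (yA b,z) \<in> R e} \<le> card (N c)"
    using finN A2_le assms by (intro card_mono) auto
  then show ?thesis using rowA[OF assms y] A2_card[OF assms(2)] by simp
qed

lemma cnt_pos: assumes "b \<in> A" "c \<in> A" "e \<le> d" "y \<in> N b" "z \<in> N c" "(y,z) \<in> R e"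
  shows "int_num X R b e c \<ge> 1"
proof -
  have "z \<in> {z \<in> N c. (y,z) \<in> R e}" using assms by blast
  moreover have "finite {z \<in> N c. (y,z) \<in> R e}" using finN A2_le assms by auto
  ultimately have "card {z \<in> N c. (y,z) \<in> R e} \<ge> 1"
    by (metis One_nat_def Suc_leI card_gt_0_iff empty_iff)
  then show ?thesis using rowA[OF assms(1-4)] by simp
qed

lemma cp2_edge: assumes "b \<in> A" "c \<in> A" "card (cplx_prod X d R (cj b) c) = 2" shows "edge b c"
proof (rule ccontr)
  assume ne: "\<not> edge b c"
  then have no1: "\<And>e. e \<le> d \<Longrightarrow> int_num X R b e c \<noteq> 1" unfolding edge_def using assms by blast
  obtain e where e: "e \<le> d" "(yA b, yA c) \<in> R e" by (rule rel_of[OF yA_N[OF assms(1)] yA_N[OF assms(2)] assms(1,2)])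
  have "int_num X R b e c = 2" using cnt_pos[OF assms(1,2) e(1) yA_N yA_N e(2)] cnt_le2[OF assms(1,2) e(1)] no1[OF e(1)] assms
    by linarith
  then have all: "y \<in> N b \<Longrightarrow> z \<in> N c \<Longrightarrow> (y,z) \<in> R e" for y z
    using full_row assms e by blast
  have "cplx_prod X d R (cj b) c = {e}"
  proof -
    have "e' = e" if "e' \<le> d" "y \<in> N b" "z \<in> N c" "(y,z) \<in> R e'" for e' y z
      using rel_uniq[OF that(1) e(1) that(4) all[OF that(2,3)]] .
    moreover have "yA b \<in> N b" "yA c \<in> N c" using yA_N assms by auto
    ultimately show ?thesis unfolding cp_char[OF assms(1,2)] using e by blast
  qed
  then show False using assms by simp
qed

lemma cp_le2: assumes "b \<in> A" "c \<in> A" shows "card (cplx_prod X d R (cj b) c) = 1 \<or> card (cplx_prod X d R (cj b) c) = 2"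
proof -
  obtain e1 where e1: "e1 \<le> d" "(yA b, yA c) \<in> R e1" by (rule rel_of[OF yA_N[OF assms(1)] yA_N[OF assms(2)] assms])
  obtain e2 where e2: "e2 \<le> d" "(yA b, yB c) \<in> R e2" by (rule rel_of[OF yA_N[OF assms(1)] yB_N[OF assms(2)] assms])
  have sub: "cplx_prod X d R (cj b) c \<subseteq> {e1, e2}"
  proof
    fix e assume "e \<in> cplx_prod X d R (cj b) c"
    then obtain y z where yz: "e \<le> d" "y \<in> N b" "z \<in> N c" "(y,z) \<in> R e" unfolding cp_char[OF assms] by blast
    have "int_num X R b e c \<ge> 1" using cnt_pos[OF assms yz] .
    then have "card {z \<in> N c. (yA b, z) \<in> R e} \<ge> 1" using rowA[OF assms yz(1) yA_N[OF assms(1)]] by simp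
    then obtain z' where z': "z' \<in> N c" "(yA b, z') \<in> R e"
      by (metis (no_types, lifting) Collect_empty_eq card.empty not_one_le_zero)
    have "z' = yA c \<or> z' = yB c" using z' yAB[OF assms(2)] by blast
    then show "e \<in> {e1, e2}" using rel_uniq[OF yz(1) e1(1)] rel_uniq[OF yz(1) e2(1)] z' e1 e2 by blast
  qed
  have "e1 \<in> cplx_prod X d R (cj b) c" unfolding cp_char[OF assms] using e1 yA_N assms by blast
  moreover have fin: "finite (cplx_prod X d R (cj b) c)" using sub finite_subset by blast
  ultimately have "card (cplx_prod X d R (cj b) c) > 0" using card_gt_0_iff by blast
  moreover have "card (cplx_prod X d R (cj b) c) \<le> card {e1, e2}" using sub by (intro card_mono) auto
  moreover have "card {e1, e2} \<le> 2" by (cases "e1 = e2") auto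
  ultimately show ?thesis by linarith
qed

end


context qt
begin

definition chain where "chain u v \<longleftrightarrow> (\<exists>a::nat. a \<ge> 1 \<and> (\<exists>i j l :: nat \<Rightarrow> nat.
        (\<forall>b\<le>a. i b \<le> d \<and> j b \<le> d \<and> l b \<le> d) \<and>
        i 0 = u \<and> l a = v \<and>
        (\<forall>b\<le>a. valency X d R (i b) = 2 \<and> valency X d R (l b) = 2 \<and>
                int_num X R (i b) (j b) (l b) = 1) \<and>
        (\<forall>c<a. l c = i (Suc c))))"

lemma bad_iff: "bad_pair X d R u v \<longleftrightarrow> chain u v \<and> card (cplx_prod X d R (cj u) v) = 1"
  unfolding bad_pair_def chain_def by blast

lemma chain_conn: assumes "chain u v" shows "conn u v"
proof -
  obtain a i j l where a: "a \<ge> 1" "\<forall>b\<le>a. i b \<le> d \<and> j b \<le> d \<and> l b \<le> d"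
     "i 0 = u" "l a = v" "\<forall>b\<le>a. valency X d R (i b) = 2 \<and> valency X d R (l b) = 2 \<and>
                int_num X R (i b) (j b) (l b) = 1" "\<forall>c<a. l c = i (Suc c)"
    using assms unfolding chain_def by blast
  have ed: "(i b, l b) \<in> Ed" if "b \<le> a" for b
  proof -
    have "i b \<in> A" "l b \<in> A" using a(2,5) that unfolding A2_def by auto
    moreover have "int_num X R (i b) (j b) (l b) = 1" "j b \<le> d" using a(2,5) that by auto
    ultimately show ?thesis unfolding Ed_def edge_def by blast
  qed
  have "b \<le> a \<Longrightarrow> (u, l b) \<in> Ed\<^sup>*" for b
  proof (induction b)
    case 0
    then show ?case using ed[of 0] a(3) by simp
  next
    case (Suc b)
    then have "(u, l b) \<in> Ed\<^sup>*" by simp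
    moreover have "l b = i (Suc b)" using a(6) Suc.prems by simp
    moreover have "(i (Suc b), l (Suc b)) \<in> Ed" using ed Suc.prems by blast
    ultimately show ?case by (metis rtrancl.rtrancl_into_rtrancl)
  qed
  then have "(u, v) \<in> Ed\<^sup>*" using a(4) by blast
  moreover have "u \<in> A" "v \<in> A" using a(2,3,4,5) a(1) unfolding A2_def by auto
  ultimately show ?thesis unfolding conn_def by blast
qed

lemma chain_refl: assumes "u \<in> A" shows "chain u u"
proof -
  have "valency X d R u = 2" "u \<le> d" using assms unfolding A2_def by auto
  moreover have "int_num X R u 0 u = 1" using int_num_refl[OF assms] .
  ultimately show ?thesis unfolding chain_def
    by (intro exI[of _ "1::nat"] conjI exI[of _ "\<lambda>_. u"] exI[of _ "\<lambda>_. 0::nat"]) auto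
qed

lemma chain_step: assumes "chain u w" "edge w v" shows "chain u v"
proof -
  obtain a i j l where a: "a \<ge> 1" "\<forall>b\<le>a. i b \<le> d \<and> j b \<le> d \<and> l b \<le> d"
     "i 0 = u" "l a = w" "\<forall>b\<le>a. valency X d R (i b) = 2 \<and> valency X d R (l b) = 2 \<and>
                int_num X R (i b) (j b) (l b) = 1" "\<forall>c<a. l c = i (Suc c)"
    using assms unfolding chain_def by blast
  obtain j0 where j0: "j0 \<le> d" "int_num X R w j0 v = 1" "w \<in> A" "v \<in> A" using assms(2) unfolding edge_def by blast
  have wv: "valency X d R w = 2" "w \<le> d" "valency X d R v = 2" "v \<le> d" using j0 unfolding A2_def by auto
  define i' where "i' = i(Suc a := w)"
  define j' where "j' = j(Suc a := j0)"
  define l' where "l' = l(Suc a := v)"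
  have 1: "\<forall>b\<le>Suc a. i' b \<le> d \<and> j' b \<le> d \<and> l' b \<le> d"
    using a(2) wv j0 unfolding i'_def j'_def l'_def by (auto simp: le_Suc_eq)
  have 2: "i' 0 = u" "l' (Suc a) = v" using a(3) unfolding i'_def l'_def by auto
  have 3: "\<forall>b\<le>Suc a. valency X d R (i' b) = 2 \<and> valency X d R (l' b) = 2 \<and>
                int_num X R (i' b) (j' b) (l' b) = 1"
    using a(5) wv j0 unfolding i'_def j'_def l'_def by (auto simp: le_Suc_eq)
  have 4: "\<forall>c<Suc a. l' c = i' (Suc c)"
    using a(4,6) unfolding i'_def l'_def by (auto simp: less_Suc_eq)
  show ?thesis unfolding chain_def
    apply (rule exI[of _ "Suc a"])
    apply (rule conjI) apply simp
    apply (rule exI[of _ i'], rule exI[of _ j'], rule exI[of _ l'])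
    using 1 2 3 4 by blast
qed

lemma conn_chain: assumes "conn u v" shows "chain u v"
proof -
  have "(u,v) \<in> Ed\<^sup>*" "u \<in> A" using assms unfolding conn_def by auto
  then show ?thesis
  proof (induction rule: rtrancl_induct)
    case base
    then show ?case using chain_refl by blast
  next
    case (step w v)
    then show ?case using chain_step Ed_def by blast
  qed
qed

lemma sim_iff: "(b,c) \<in> sim_rel X d R \<longleftrightarrow> conn b c"
proof
  assume h: "(b,c) \<in> sim_rel X d R"
  then have bc: "b \<in> A" "c \<in> A" unfolding sim_rel_def by auto
  have "card (cplx_prod X d R (cj b) c) = 2 \<or> bad_pair X d R b c" using h unfolding sim_rel_def by auto
  then show "conn b c"
  proof
    assume "card (cplx_prod X d R (cj b) c) = 2"
    then show ?thesis using cp2_edge bc edge_conn by blast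
  next
    assume "bad_pair X d R b c"
    then show ?thesis using bad_iff chain_conn by blast
  qed
next
  assume h: "conn b c"
  then have bc: "b \<in> A" "c \<in> A" unfolding conn_def by auto
  have "card (cplx_prod X d R (cj b) c) = 2 \<or> bad_pair X d R b c"
  proof (cases "card (cplx_prod X d R (cj b) c) = 2")
    case False
    then have "card (cplx_prod X d R (cj b) c) = 1" using cp_le2 bc by blast
    then show ?thesis using bad_iff conn_chain h by blast
  qed simp
  then show "(b,c) \<in> sim_rel X d R" unfolding sim_rel_def using bc by blast
qed

lemma sim_eq: "sim_rel X d R = {(b,c). conn b c}" using sim_iff by auto

lemma equiv_sim: "equiv A (sim_rel X d R)"
proof (rule equivI)
  show "sim_rel X d R \<subseteq> A \<times> A" unfolding sim_eq conn_def by auto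
  show "refl_on A (sim_rel X d R)" unfolding refl_on_def sim_eq using conn_refl by blast
  show "sym (sim_rel X d R)" unfolding sym_def sim_eq using conn_sym by blast
  show "trans (sim_rel X d R)" unfolding trans_def sim_eq using conn_trans by blast
qed

abbreviation Cs where "Cs \<equiv> A // sim_rel X d R"

lemma cls_form: assumes "C \<in> Cs" obtains a where "a \<in> A" "C = {c. conn a c}"
proof -
  obtain a where "C = sim_rel X d R `` {a}" "a \<in> A" using assms by (rule quotientE)
  moreover have "sim_rel X d R `` {a} = {c. conn a c}" unfolding sim_eq by auto
  ultimately show ?thesis using that by simp
qed

lemma cls_sub: "C \<in> Cs \<Longrightarrow> C \<subseteq> A" using in_quotient_imp_subset[OF equiv_sim] by blast
lemma finA: "finite A" unfolding A2_def by simp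
lemma cls_fin: "C \<in> Cs \<Longrightarrow> finite C" using cls_sub finA finite_subset by blast
lemma cls_conn: assumes "C \<in> Cs" "a \<in> C" "c \<in> C" shows "conn a c"
proof -
  obtain e where "C = {c. conn e c}" using cls_form[OF assms(1)] by blast
  then show ?thesis using assms conn_sym conn_trans by blast
qed
lemma cls_closed: assumes "C \<in> Cs" "a \<in> C" "conn a c" shows "c \<in> C"
proof -
  obtain e where "C = {c. conn e c}" using cls_form[OF assms(1)] by blast
  then show ?thesis using assms conn_trans by blast
qed
lemma cls_of: assumes "a \<in> A" shows "{c. conn a c} \<in> Cs"
proof -
  have "sim_rel X d R `` {a} = {c. conn a c}" unfolding sim_eq by auto
  then show ?thesis using assms quotientI by metis
qed
lemma cls_uniq: assumes "C \<in> Cs" "C' \<in> Cs" "a \<in> C" "a \<in> C'" shows "C = C'"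
  using quotient_disj[OF equiv_sim assms(1,2)] assms(3,4) by blast

definition en where "en C i = sorted_list_of_set C ! i"

lemma en_bij: assumes "C \<in> Cs" shows "bij_betw (en C) {..<card C} C"
proof -
  have "finite C" using cls_fin assms by blast
  then show ?thesis unfolding en_def
    by (intro bij_betw_nth) auto
qed

lemma en_in: "C \<in> Cs \<Longrightarrow> i < card C \<Longrightarrow> en C i \<in> C" using en_bij bij_betwE by blast
lemma en_inj: "C \<in> Cs \<Longrightarrow> i < card C \<Longrightarrow> j < card C \<Longrightarrow> en C i = en C j \<longleftrightarrow> i = j"
  using en_bij bij_betw_imp_inj_on inj_on_eq_iff lessThan_iff by metis
lemma en_surj: assumes "C \<in> Cs" "a \<in> C" obtains i where "i < card C" "en C i = a"
  using en_bij[OF assms(1)] assms(2) by (metis bij_betw_iff_bijections lessThan_iff)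

end


context qt
begin

definition mv :: "('a, 'f::field) xmat \<Rightarrow> ('a \<Rightarrow> 'f) \<Rightarrow> 'a \<Rightarrow> 'f" where
  "mv M f = (\<lambda>y. \<Sum>w\<in>X. M y w * f w)"

definition u :: "nat \<Rightarrow> 'a \<Rightarrow> 'f::field" where
  "u a = (\<lambda>y. if y \<in> N a then 1 else 0)"

definition v :: "nat \<Rightarrow> 'a \<Rightarrow> 'f::field" where
  "v a = (\<lambda>y. if y = yA a then 1 else if y = yB a then -1 else 0)"

lemma sum_if_card: "finite S \<Longrightarrow> (\<Sum>w\<in>S. if P w then (1::'f::field) else 0) = of_nat (card {w\<in>S. P w})"
proof -
  assume "finite S"
  then have "(\<Sum>w\<in>S. of_bool (P w) :: 'f) = of_nat (card (S \<inter> {x. P x}))" by simp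
  moreover have "S \<inter> {x. P x} = {w\<in>S. P w}" by blast
  ultimately show ?thesis by (simp add: of_bool_def)
qed

lemma mv_mult: "mv (xmat_mult X M K) f = mv M (mv K f)"
proof
  fix y
  have "mv (xmat_mult X M K) f y = (\<Sum>w\<in>X. (\<Sum>w'\<in>X. M y w' * K w' w) * f w)"
    unfolding mv_def xmat_mult_def by simp
  also have "\<dots> = (\<Sum>w\<in>X. \<Sum>w'\<in>X. M y w' * K w' w * f w)" by (simp add: sum_distrib_right)
  also have "\<dots> = (\<Sum>w'\<in>X. \<Sum>w\<in>X. M y w' * K w' w * f w)" by (rule sum.swap)
  also have "\<dots> = (\<Sum>w'\<in>X. M y w' * (\<Sum>w\<in>X. K w' w * f w))"
    by (simp add: sum_distrib_left mult.assoc)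
  also have "\<dots> = mv M (mv K f) y" unfolding mv_def by simp
  finally show "mv (xmat_mult X M K) f y = mv M (mv K f) y" .
qed

lemma mv_add: "mv (\<lambda>y z. M y z + K y z) f = (\<lambda>y. mv M f y + mv K f y)"
  unfolding mv_def by (simp add: distrib_right sum.distrib)

lemma mv_smult: "mv (\<lambda>y z. c * M y z) f = (\<lambda>y. c * mv M f y)"
  unfolding mv_def by (simp add: sum_distrib_left mult.assoc)

lemma mv_zero: "mv (\<lambda>y z. 0) f = (\<lambda>y. 0)"
  unfolding mv_def by simp

lemma mv_lin: "finite S \<Longrightarrow> mv M (\<lambda>w. \<Sum>t\<in>S. c t * g t w) = (\<lambda>y. \<Sum>t\<in>S. c t * mv M (g t) y)"
proof
  fix y assume "finite S"
  have "mv M (\<lambda>w. \<Sum>t\<in>S. c t * g t w) y = (\<Sum>w\<in>X. \<Sum>t\<in>S. M y w * (c t * g t w))"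
    unfolding mv_def by (simp add: sum_distrib_left)
  also have "\<dots> = (\<Sum>t\<in>S. \<Sum>w\<in>X. M y w * (c t * g t w))" by (rule sum.swap)
  also have "\<dots> = (\<Sum>t\<in>S. c t * mv M (g t) y)" unfolding mv_def
    by (simp add: sum_distrib_left mult.left_commute)
  finally show "mv M (\<lambda>w. \<Sum>t\<in>S. c t * g t w) y = (\<Sum>t\<in>S. c t * mv M (g t) y)" .
qed

lemma mv_scal: "mv M (\<lambda>w. c * g w) = (\<lambda>y. c * mv M g y)"
  unfolding mv_def by (simp add: sum_distrib_left mult.left_commute)

lemma mv_zero_f: "mv M (\<lambda>w. 0) = (\<lambda>y. 0)" unfolding mv_def by simp

definition W0 :: "('a \<Rightarrow> 'f::field) \<Rightarrow> bool" where
  "W0 g \<longleftrightarrow> (\<forall>y. y \<notin> X \<longrightarrow> g y = 0) \<and> (\<forall>a\<le>d. \<forall>y\<in>N a. \<forall>y'\<in>N a. g y = g y')"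

definition W1 :: "('a \<Rightarrow> 'f::field) \<Rightarrow> bool" where
  "W1 g \<longleftrightarrow> (\<forall>y. y \<notin> X \<longrightarrow> g y = 0) \<and> (\<forall>a\<le>d. (\<Sum>y\<in>N a. g y) = 0)"

definition rep where "rep a = (SOME y. y \<in> N a)"
lemma rep_N: "a \<le> d \<Longrightarrow> rep a \<in> N a" unfolding rep_def using N_ne by (metis some_in_eq)

lemma part_of: assumes "y \<in> X" obtains a where "a \<le> d" "y \<in> N a" using N_part[OF assms] by blast

lemma u_at: "a \<le> d \<Longrightarrow> b \<le> d \<Longrightarrow> y \<in> N a \<Longrightarrow> u b y = (if b = a then 1 else 0)"
  unfolding u_def using N_disj by auto

lemma u_out: "y \<notin> X \<Longrightarrow> b \<le> d \<Longrightarrow> u b y = 0" unfolding u_def using N_sub by auto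

lemma yAB_X: "c \<in> A \<Longrightarrow> yA c \<in> X \<and> yB c \<in> X" using yA_N yB_N N_sub A2_le by blast

lemma v_out: "c \<in> A \<Longrightarrow> y \<notin> N c \<Longrightarrow> v c y = 0" unfolding v_def using yA_N yB_N by auto

lemma v_yA: "c \<in> A \<Longrightarrow> v c (yA c) = 1" unfolding v_def by simp
lemma v_yB: assumes "c \<in> A" shows "v c (yB c) = -1"
proof -
  have "yB c \<noteq> yA c" using yAB(2)[OF assms] by simp
  then show ?thesis unfolding v_def by simp
qed

lemma v_at: assumes "a \<in> A" "c \<in> A" shows "v c (yA a) = (if a = c then 1 else 0)"
proof (cases "a = c")
  case True then show ?thesis using v_yA assms by simp
next
  case False
  have "yA a \<notin> N c" using N_disj yA_N assms A2_le False by blast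
  then show ?thesis using v_out assms False by simp
qed

lemma sum_N_A: assumes "c \<in> A" shows "(\<Sum>y\<in>N c. g y) = g (yA c) + g (yB c)"
  using yAB[OF assms] by simp

lemma v_sumN: assumes "c \<in> A" "a \<le> d" shows "(\<Sum>y\<in>N a. v c y) = (0::'f::field)"
proof (cases "a = c")
  case True
  have "v c (yA c) = (1::'f)" by (rule v_yA[OF assms(1)])
  moreover have "v c (yB c) = (-1::'f)" by (rule v_yB[OF assms(1)])
  moreover have "(\<Sum>y\<in>N c. v c y) = v c (yA c) + (v c (yB c) :: 'f)" by (rule sum_N_A[OF assms(1)])
  ultimately show ?thesis using True by simp
next
  case False
  have "\<forall>y\<in>N a. v c y = (0::'f)" using v_out[OF assms(1)] N_disj assms A2_le False by blast
  then show ?thesis by simp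
qed

lemma sum_v: assumes "c \<in> A" shows "(\<Sum>w\<in>X. v c w * h w) = h (yA c) - (h (yB c) :: 'f::field)"
proof -
  have "(\<Sum>w\<in>X. v c w * h w) = (\<Sum>w\<in>N c. v c w * h w)"
    using N_sub[OF A2_le[OF assms]] v_out[OF assms] finX
    by (intro sum.mono_neutral_right) auto
  also have "\<dots> = h (yA c) - h (yB c)"
  proof -
    have "v c (yA c) = (1::'f)" by (rule v_yA[OF assms(1)])
    moreover have "v c (yB c) = (-1::'f)" by (rule v_yB[OF assms(1)])
    moreover have "(\<Sum>w\<in>N c. v c w * h w) = v c (yA c) * h (yA c) + v c (yB c) * h (yB c)" by (rule sum_N_A[OF assms(1)])
    ultimately show ?thesis by simp
  qed
  finally show ?thesis .
qed

lemma sum_u: assumes "j \<le> d" shows "(\<Sum>w\<in>X. u j w * h w) = (\<Sum>w\<in>N j. (h w :: 'f::field))"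
proof -
  have "(\<Sum>w\<in>X. u j w * h w) = (\<Sum>w\<in>N j. u j w * h w)"
    using N_sub[OF assms] finX unfolding u_def
    by (intro sum.mono_neutral_right) auto
  also have "\<dots> = (\<Sum>w\<in>N j. h w)" unfolding u_def by simp
  finally show ?thesis .
qed

lemma W0_u: "j \<le> d \<Longrightarrow> W0 (u j)" unfolding W0_def using u_out u_at by metis

lemma W1_v: assumes "c \<in> A" shows "W1 (v c)"
proof -
  have "v c y = 0" if "y \<notin> X" for y
  proof -
    have "y \<noteq> yA c" "y \<noteq> yB c" using yAB_X[OF assms] that by auto
    then show ?thesis unfolding v_def by simp
  qed
  then show ?thesis unfolding W1_def using v_sumN[OF assms] by blast
qed

lemma W0_decomp: fixes g :: "'a \<Rightarrow> 'f::field" assumes "W0 g" shows "g = (\<lambda>y. \<Sum>a\<le>d. g (rep a) * u a y)"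
proof
  fix y
  show "g y = (\<Sum>a\<le>d. g (rep a) * u a y)"
  proof (cases "y \<in> X")
    case False
    have "(\<Sum>a\<le>d. g (rep a) * u a y) = 0" by (rule sum.neutral) (simp add: u_out False)
    then show ?thesis using assms False unfolding W0_def by simp
  next
    case True
    then obtain a0 where a0: "a0 \<le> d" "y \<in> N a0" by (rule part_of)
    have "(\<Sum>a\<le>d. g (rep a) * u a y) = (\<Sum>a\<le>d. if a = a0 then g (rep a0) else 0)"
      by (intro sum.cong) (simp_all add: u_at[OF a0(1) _ a0(2)])
    also have "\<dots> = g (rep a0)" using a0 by simp
    also have "\<dots> = g y" using assms rep_N[OF a0(1)] a0 unfolding W0_def by blast
    finally show ?thesis by simp
  qed
qed

lemma W1_decomp: fixes g :: "'a \<Rightarrow> 'f::field" assumes "W1 g" shows "g = (\<lambda>y. \<Sum>c\<in>A. g (yA c) * v c y)"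
proof
  fix y
  show "g y = (\<Sum>c\<in>A. g (yA c) * v c y)"
  proof (cases "y \<in> X")
    case False
    then have "\<forall>c\<in>A. v c y = (0::'f)" using v_out yA_N N_sub A2_le by blast
    then show ?thesis using assms False unfolding W1_def by simp
  next
    case True
    then obtain a0 where a0: "a0 \<le> d" "y \<in> N a0" by (rule part_of)
    have others: "v c y = 0" if "c \<in> A" "c \<noteq> a0" for c
      using v_out[OF that(1)] N_disj a0 A2_le that by blast
    show ?thesis
    proof (cases "a0 \<in> A")
      case False
      then have "card (N a0) = 1" using card1_or2 a0 by blast
      then obtain z where "N a0 = {z}" using card_1_singletonE by blast
      then have "N a0 = {y}" using a0 by simp
      then have "g y = 0" using assms a0 unfolding W1_def by force
      moreover have "\<forall>c\<in>A. v c y = (0::'f)" using others False by blast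
      ultimately show ?thesis by simp
    next
      case True
      have "(\<Sum>c\<in>A. g (yA c) * v c y) = (\<Sum>c\<in>A. if c = a0 then g (yA a0) * v a0 y else 0)"
        using others by (intro sum.cong) auto
      also have "\<dots> = g (yA a0) * v a0 y" using True finA by simp
      also have "\<dots> = g y"
      proof -
        have "(\<Sum>y\<in>N a0. g y) = g (yA a0) + g (yB a0)" by (rule sum_N_A[OF True])
        moreover have "(\<Sum>y\<in>N a0. g y) = 0" using assms a0 unfolding W1_def by blast
        ultimately have s: "g (yA a0) + g (yB a0) = 0" by simp
        have "y = yA a0 \<or> y = yB a0" using yAB[OF True] a0 by blast
        then show ?thesis
        proof
          assume "y = yA a0" then show ?thesis using True by (simp add: v_yA)
        next
          assume "y = yB a0" then show ?thesis using True s
            by (simp add: v_yB add_eq_0_iff)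
        qed
      qed
      finally show ?thesis by simp
    qed
  qed
qed

lemma W0_sum: assumes "finite S" "\<forall>t\<in>S. W0 (h t)" shows "W0 (\<lambda>y. \<Sum>t\<in>S. c t * h t y)"
  unfolding W0_def
proof (intro conjI allI impI ballI)
  fix y :: 'a assume "y \<notin> X"
  then have "\<forall>t\<in>S. h t y = 0" using assms(2) unfolding W0_def by blast
  then show "(\<Sum>t\<in>S. c t * h t y) = 0" by simp
next
  fix a y y' assume h: "a \<le> d" "y \<in> N a" "y' \<in> N a"
  then have "\<forall>t\<in>S. h t y = h t y'" using assms(2) unfolding W0_def by blast
  then show "(\<Sum>t\<in>S. c t * h t y) = (\<Sum>t\<in>S. c t * h t y')" by simp
qed

lemma W1_sum: assumes "finite S" "\<forall>t\<in>S. W1 (h t)" shows "W1 (\<lambda>y. \<Sum>t\<in>S. c t * h t y)"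
proof -
  have "(\<Sum>y\<in>N a. \<Sum>t\<in>S. c t * h t y) = 0" if "a \<le> d" for a
  proof -
    have "(\<Sum>y\<in>N a. \<Sum>t\<in>S. c t * h t y) = (\<Sum>t\<in>S. c t * (\<Sum>y\<in>N a. h t y))"
      by (simp add: sum.swap[of _ "N a"] sum_distrib_left)
    also have "\<dots> = 0" using assms that unfolding W1_def by simp
    finally show ?thesis .
  qed
  then show ?thesis using assms unfolding W1_def by auto
qed

definition supp :: "('a, 'f::field) xmat \<Rightarrow> bool" where
  "supp M \<longleftrightarrow> (\<forall>y z. y \<notin> X \<or> z \<notin> X \<longrightarrow> M y z = 0)"

definition invT :: "('a, 'f::field) xmat \<Rightarrow> bool" where
  "invT M \<longleftrightarrow> supp M \<and> (\<forall>j\<le>d. W0 (mv M (u j))) \<and>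
     (\<forall>c\<in>A. W1 (mv M (v c)) \<and> (\<forall>a\<in>A. \<not> conn a c \<longrightarrow> mv M (v c) (yA a) = 0))"

lemma supp_mv: "supp M \<Longrightarrow> y \<notin> X \<Longrightarrow> mv M f y = 0" unfolding supp_def mv_def by simp

end


context qt
begin

lemma mv_u: assumes "j \<le> d" shows "mv M (u j) y = (\<Sum>w\<in>N j. (M y w :: 'f::field))"
proof -
  have "mv M (u j) y = (\<Sum>w\<in>X. u j w * M y w)" unfolding mv_def by (simp add: mult.commute)
  also have "\<dots> = (\<Sum>w\<in>N j. M y w)" by (rule sum_u[OF assms])
  finally show ?thesis .
qed

lemma mv_v: assumes "c \<in> A" shows "mv M (v c) y = M y (yA c) - (M y (yB c) :: 'f::field)"
proof -
  have "mv M (v c) y = (\<Sum>w\<in>X. v c w * M y w)" unfolding mv_def by (simp add: mult.commute)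
  also have "\<dots> = M y (yA c) - M y (yB c)" by (rule sum_v[OF assms])
  finally show ?thesis .
qed

lemma W0_add: assumes "W0 g" "W0 h" shows "W0 (\<lambda>y. g y + h y)"
proof -
  have a: "\<forall>y. y\<notin>X \<longrightarrow> g y = 0" "\<forall>a\<le>d. \<forall>y\<in>N a. \<forall>y'\<in>N a. g y = g y'" using assms(1) unfolding W0_def by blast+
  have b: "\<forall>y. y\<notin>X \<longrightarrow> h y = 0" "\<forall>a\<le>d. \<forall>y\<in>N a. \<forall>y'\<in>N a. h y = h y'" using assms(2) unfolding W0_def by blast+
  show ?thesis unfolding W0_def
  proof (intro conjI allI impI ballI)
    fix y assume "y \<notin> X" then show "g y + h y = 0" using a(1) b(1) by simp
  next
    fix a y y' assume "a \<le> d" "y \<in> N a" "y' \<in> N a"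
    then have "g y = g y'" "h y = h y'" using a(2) b(2) by blast+
    then show "g y + h y = g y' + h y'" by simp
  qed
qed
lemma W0_scal: assumes "W0 g" shows "W0 (\<lambda>y. c * g y)"
proof -
  have a: "\<forall>y. y\<notin>X \<longrightarrow> g y = 0" "\<forall>a\<le>d. \<forall>y\<in>N a. \<forall>y'\<in>N a. g y = g y'" using assms(1) unfolding W0_def by blast+
  show ?thesis unfolding W0_def
  proof (intro conjI allI impI ballI)
    fix y assume "y \<notin> X" then show "c * g y = 0" using a(1) by simp
  next
    fix a y y' assume "a \<le> d" "y \<in> N a" "y' \<in> N a"
    then have "g y = g y'" using a(2) by blast
    then show "c * g y = c * g y'" by simp
  qed
qed
lemma W1_add: "W1 g \<Longrightarrow> W1 h \<Longrightarrow> W1 (\<lambda>y. g y + h y)" unfolding W1_def by (simp add: sum.distrib)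
lemma W1_scal: "W1 g \<Longrightarrow> W1 (\<lambda>y. c * g y)" unfolding W1_def by (simp add: sum_distrib_left[symmetric])

lemma inv_adj: assumes "b \<le> d" shows "invT (adj_mat R b :: ('a, 'f::field) xmat)"
proof -
  let ?M = "adj_mat R b :: ('a, 'f) xmat"
  have supp: "supp ?M" unfolding supp_def adj_mat_def using RX1[OF assms] RX2[OF assms] by auto
  have W0: "W0 (mv ?M (u j))" if j: "j \<le> d" for j
  proof -
    have val: "mv ?M (u j) y = of_nat (int_num X R j (cj b) a)" if "a \<le> d" "y \<in> N a" for a y
    proof -
      have "mv ?M (u j) y = (\<Sum>w\<in>N j. if (y,w) \<in> R b then 1 else 0)"
        unfolding mv_u[OF j] adj_mat_def by simp
      also have "\<dots> = of_nat (card {w\<in>N j. (y,w) \<in> R b})" using finN[OF j] by (rule sum_if_card)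
      also have "\<dots> = of_nat (int_num X R j (cj b) a)" using row_count[OF that(1) assms j that(2)] by simp
      finally show ?thesis .
    qed
    show ?thesis unfolding W0_def using supp_mv[OF supp] val by metis
  qed
  have W1: "W1 (mv ?M (v c))" if c: "c \<in> A" for c
  proof -
    have "(\<Sum>y\<in>N a. mv ?M (v c) y) = 0" if a: "a \<le> d" for a
    proof -
      have "(\<Sum>y\<in>N a. mv ?M (v c) y) = (\<Sum>y\<in>N a. ?M y (yA c)) - (\<Sum>y\<in>N a. ?M y (yB c))"
        unfolding mv_v[OF c] by (simp add: sum_subtractf)
      also have "(\<Sum>y\<in>N a. ?M y (yA c)) = of_nat (card {y\<in>N a. (y, yA c) \<in> R b})"
        unfolding adj_mat_def using finN[OF a] by (rule sum_if_card)
      also have "\<dots> = of_nat (int_num X R a b c)" using col_count[OF a assms A2_le[OF c] yA_N[OF c]] by simp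
      also have "(\<Sum>y\<in>N a. ?M y (yB c)) = of_nat (card {y\<in>N a. (y, yB c) \<in> R b})"
        unfolding adj_mat_def using finN[OF a] by (rule sum_if_card)
      also have "\<dots> = of_nat (int_num X R a b c)" using col_count[OF a assms A2_le[OF c] yB_N[OF c]] by simp
      finally show ?thesis by simp
    qed
    then show ?thesis unfolding W1_def using supp_mv[OF supp] by blast
  qed
  have cn: "mv ?M (v c) (yA a) = 0" if ac: "c \<in> A" "a \<in> A" "\<not> conn a c" for a c
  proof (rule ccontr)
    assume ne: "mv ?M (v c) (yA a) \<noteq> 0"
    let ?P1 = "(yA a, yA c) \<in> R b" and ?P2 = "(yA a, yB c) \<in> R b"
    have "mv ?M (v c) (yA a) = (if ?P1 then 1 else 0) - (if ?P2 then 1 else 0)"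
      unfolding mv_v[OF ac(1)] adj_mat_def by simp
    then have xor: "(?P1 \<and> \<not> ?P2) \<or> (?P2 \<and> \<not> ?P1)" using ne by (auto split: if_splits)
    have Nc: "N c = {yA c, yB c}" "yA c \<noteq> yB c" using yAB[OF ac(1)] by auto
    have "card {z\<in>N c. (yA a, z) \<in> R b} = 1"
    proof (cases "?P1")
      case True
      then have "{z\<in>N c. (yA a, z) \<in> R b} = {yA c}" using xor Nc by auto
      then show ?thesis by simp
    next
      case False
      then have "{z\<in>N c. (yA a, z) \<in> R b} = {yB c}" using xor Nc by auto
      then show ?thesis by simp
    qed
    then have "int_num X R a b c = 1" using rowA[OF ac(2) ac(1) assms yA_N[OF ac(2)]] by simp
    then have "edge a c" unfolding edge_def using ac assms by blast
    then show False using edge_conn ac by blast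
  qed
  show ?thesis unfolding invT_def using supp W0 W1 cn by blast
qed

lemma mv_E: assumes "a' \<le> d" shows "mv (dual_idem R x a' :: ('a,'f::field) xmat) f y = (if y \<in> N a' then f y else 0)"
proof (cases "y \<in> N a'")
  case True
  then have yX: "y \<in> X" using N_sub[OF assms] by blast
  have "mv (dual_idem R x a' :: ('a,'f) xmat) f y = (\<Sum>w\<in>X. if w = y then f y else 0)"
    unfolding mv_def dual_idem_def using True unfolding N_def by (intro sum.cong) auto
  also have "\<dots> = f y" using yX finX by simp
  finally show ?thesis using True by simp
next
  case False
  then show ?thesis unfolding mv_def dual_idem_def N_def by simp
qed

lemma inv_E: assumes "a' \<le> d" shows "invT (dual_idem R x a' :: ('a, 'f::field) xmat)"
proof -
  let ?M = "dual_idem R x a' :: ('a, 'f) xmat"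
  have supp: "supp ?M" unfolding supp_def dual_idem_def using RX2[OF assms] by auto
  have mem: "y \<in> N a' \<longleftrightarrow> a = a'" if "a \<le> d" "y \<in> N a" for a y
    using N_disj[OF that(1) assms that(2)] that by auto
  have W0: "W0 (mv ?M (u j))" if j: "j \<le> d" for j
  proof -
    have "mv ?M (u j) y = mv ?M (u j) y'" if "a \<le> d" "y \<in> N a" "y' \<in> N a" for a y y'
    proof -
      have "u j y = (u j y' :: 'f)" using W0_u[OF j] that unfolding W0_def by blast
      then show ?thesis unfolding mv_E[OF assms] using mem[OF that(1,2)] mem[OF that(1,3)] by simp
    qed
    then show ?thesis unfolding W0_def using supp_mv[OF supp] by blast
  qed
  have W1: "W1 (mv ?M (v c))" if c: "c \<in> A" for c
  proof -
    have "(\<Sum>y\<in>N a. mv ?M (v c) y) = 0" if a: "a \<le> d" for a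
    proof (cases "a = a'")
      case True
      then show ?thesis unfolding mv_E[OF assms] using v_sumN[OF c a] by simp
    next
      case False
      then have "\<forall>y\<in>N a. mv ?M (v c) y = 0" unfolding mv_E[OF assms] using mem[OF a] by auto
      then show ?thesis by simp
    qed
    then show ?thesis unfolding W1_def using supp_mv[OF supp] by blast
  qed
  have cn: "mv ?M (v c) (yA a) = 0" if ac: "c \<in> A" "a \<in> A" "\<not> conn a c" for a c
  proof -
    have "a \<noteq> c" using ac conn_refl by blast
    then have "v c (yA a) = (0::'f)" by (simp add: v_at ac)
    then show ?thesis unfolding mv_E[OF assms] by simp
  qed
  show ?thesis unfolding invT_def using supp W0 W1 cn by blast
qed

lemma mv_one: "mv (xmat_one X :: ('a,'f::field) xmat) f y = (if y \<in> X then f y else 0)"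
proof (cases "y \<in> X")
  case True
  have "mv (xmat_one X :: ('a,'f) xmat) f y = (\<Sum>w\<in>X. if w = y then f y else 0)"
    unfolding mv_def xmat_one_def using True by (intro sum.cong) auto
  also have "\<dots> = f y" using True finX by simp
  finally show ?thesis using True by simp
next
  case False
  then show ?thesis unfolding mv_def xmat_one_def by simp
qed

lemma inv_one: "invT (xmat_one X :: ('a, 'f::field) xmat)"
proof -
  let ?M = "xmat_one X :: ('a, 'f) xmat"
  have supp: "supp ?M" unfolding supp_def xmat_one_def by auto
  have W0: "W0 (mv ?M (u j))" if j: "j \<le> d" for j
  proof -
    have "mv ?M (u j) = u j"
    proof
      fix y show "mv ?M (u j) y = u j y" by (cases "y \<in> X") (simp_all add: mv_one u_out j)
    qed
    then show ?thesis using W0_u[OF j] by simp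
  qed
  have W1: "W1 (mv ?M (v c))" if c: "c \<in> A" for c
  proof -
    have vo: "\<forall>y. y \<notin> X \<longrightarrow> v c y = (0::'f)" using W1_v[OF c] unfolding W1_def by blast
    have "mv ?M (v c) = v c"
    proof
      fix y show "mv ?M (v c) y = v c y" using vo by (cases "y \<in> X") (simp_all add: mv_one)
    qed
    then show ?thesis using W1_v[OF c] by simp
  qed
  have cn: "mv ?M (v c) (yA a) = 0" if ac: "c \<in> A" "a \<in> A" "\<not> conn a c" for a c
  proof -
    have "a \<noteq> c" using ac conn_refl by blast
    then show ?thesis using yAB_X[OF ac(2)] by (simp add: mv_one v_at ac)
  qed
  show ?thesis unfolding invT_def using supp W0 W1 cn by blast
qed

lemma inv_zero: "invT ((\<lambda>y z. 0) :: ('a, 'f::field) xmat)"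
  unfolding invT_def supp_def mv_zero W0_def W1_def by simp

lemma inv_add: assumes "invT M" "invT K" shows "invT (\<lambda>y z. M y z + K y z :: 'f::field)"
proof -
  have s: "supp (\<lambda>y z. M y z + K y z)" using assms unfolding invT_def supp_def by simp
  show ?thesis using assms s unfolding invT_def mv_add by (simp add: W0_add W1_add)
qed

lemma inv_smult: assumes "invT M" shows "invT (\<lambda>y z. c * M y z :: 'f::field)"
proof -
  have s: "supp (\<lambda>y z. c * M y z)" using assms unfolding invT_def supp_def by simp
  show ?thesis using assms s unfolding invT_def mv_smult by (simp add: W0_scal W1_scal)
qed

lemma inv_mult: assumes M: "invT M" and K: "invT K" shows "invT (xmat_mult X M K :: ('a,'f::field) xmat)"
proof -
  have sM: "supp M" and sK: "supp K" using assms unfolding invT_def by blast+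
  have s: "supp (xmat_mult X M K)" unfolding supp_def xmat_mult_def
  proof (intro allI impI)
    fix y z assume "y \<notin> X \<or> z \<notin> X"
    then have "\<forall>w\<in>X. M y w * K w z = 0" using sM sK unfolding supp_def by auto
    then show "(\<Sum>w\<in>X. M y w * K w z) = 0" by (intro sum.neutral) blast
  qed
  have W0: "W0 (mv (xmat_mult X M K) (u j))" if j: "j \<le> d" for j
  proof -
    have w: "W0 (mv K (u j))" using K j unfolding invT_def by blast
    have "mv (xmat_mult X M K) (u j) = mv M (\<lambda>y. \<Sum>a\<le>d. mv K (u j) (rep a) * u a y)"
      unfolding mv_mult using W0_decomp[OF w] by simp
    also have "\<dots> = (\<lambda>y. \<Sum>a\<le>d. mv K (u j) (rep a) * mv M (u a) y)" by (rule mv_lin) simp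
    finally show ?thesis using M unfolding invT_def by (simp add: W0_sum)
  qed
  have dec: "mv (xmat_mult X M K) (v c) = (\<lambda>y. \<Sum>e\<in>A. mv K (v c) (yA e) * mv M (v e) y)"
    if c: "c \<in> A" for c
  proof -
    have w: "W1 (mv K (v c))" using K c unfolding invT_def by blast
    have "mv (xmat_mult X M K) (v c) = mv M (\<lambda>y. \<Sum>e\<in>A. mv K (v c) (yA e) * v e y)"
      unfolding mv_mult using W1_decomp[OF w] by simp
    also have "\<dots> = (\<lambda>y. \<Sum>e\<in>A. mv K (v c) (yA e) * mv M (v e) y)" by (rule mv_lin) (rule finA)
    finally show ?thesis .
  qed
  have W1: "W1 (mv (xmat_mult X M K) (v c))" if c: "c \<in> A" for c
    unfolding dec[OF c] using M finA unfolding invT_def by (simp add: W1_sum)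
  have cn: "mv (xmat_mult X M K) (v c) (yA a) = 0" if ac: "c \<in> A" "a \<in> A" "\<not> conn a c" for a c
  proof -
    have "mv K (v c) (yA e) * mv M (v e) (yA a) = 0" if e: "e \<in> A" for e
    proof (cases "conn e c")
      case True
      then have "\<not> conn a e" using ac conn_trans by blast
      then show ?thesis using M e ac unfolding invT_def by simp
    next
      case False
      then show ?thesis using K e ac unfolding invT_def by simp
    qed
    then show ?thesis unfolding dec[OF ac(1)] by (intro sum.neutral) blast
  qed
  show ?thesis unfolding invT_def using s W0 W1 cn by blast
qed

lemma T_inv: assumes "M \<in> (terwilliger_alg X d R x :: ('a, 'f::field) xmat set)" shows "invT M"
  using assms unfolding terwilliger_alg_def
proof (induction rule: gen_alg.induct)
  case (gen A)
  then show ?case using inv_adj inv_E by auto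
next
  case one then show ?case by (rule inv_one)
next
  case zero then show ?case by (rule inv_zero)
next
  case (add A B) then show ?case by (blast intro: inv_add)
next
  case (smult A c) then show ?case by (blast intro: inv_smult)
next
  case (mult A B) then show ?case by (blast intro: inv_mult)
qed

end


context qt
begin

definition II :: "nat set option set" where "II = insert None (Some ` Cs)"
definition nn :: "nat set option \<Rightarrow> nat" where "nn k = (case k of None \<Rightarrow> d + 1 | Some C \<Rightarrow> card C)"

definition phi :: "('a, 'f::field) xmat \<Rightarrow> nat set option \<Rightarrow> nat \<Rightarrow> nat \<Rightarrow> 'f" where
  "phi M k i j = (case k of None \<Rightarrow> if i \<le> d \<and> j \<le> d then mv M (u j) (rep i) else 0
     | Some C \<Rightarrow> if C \<in> Cs \<and> i < card C \<and> j < card C then mv M (v (en C j)) (yA (en C i)) else 0)"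

lemma phi_None: "phi M None i j = (if i \<le> d \<and> j \<le> d then mv M (u j) (rep i) else 0)"
  unfolding phi_def by simp
lemma phi_Some: "phi M (Some C) i j = (if C \<in> Cs \<and> i < card C \<and> j < card C then mv M (v (en C j)) (yA (en C i)) else 0)"
  unfolding phi_def by simp

lemma phi_carrier: "phi M \<in> blocks_carrier II nn"
  unfolding blocks_carrier_def
proof (intro CollectI allI impI)
  fix k i j assume h: "phi M k i j \<noteq> 0"
  show "k \<in> II \<and> i < nn k \<and> j < nn k"
  proof (cases k)
    case None then show ?thesis using h unfolding II_def nn_def by (auto simp: phi_None split: if_splits)
  next
    case (Some C) then show ?thesis using h unfolding II_def nn_def by (auto simp: phi_Some split: if_splits)
  qed
qed

lemma phi_add: "phi (\<lambda>y z. M y z + K y z) = (\<lambda>k i j. phi M k i j + phi K k i j)"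
proof (intro ext)
  fix k i j show "phi (\<lambda>y z. M y z + K y z) k i j = phi M k i j + phi K k i j"
    by (cases k) (simp_all add: phi_None phi_Some mv_add)
qed

lemma phi_smult: "phi (\<lambda>y z. c * M y z) = (\<lambda>k i j. c * phi M k i j)"
proof (intro ext)
  fix k i j show "phi (\<lambda>y z. c * M y z) k i j = c * phi M k i j"
    by (cases k) (simp_all add: phi_None phi_Some mv_smult)
qed

lemma mv_sum: "finite S \<Longrightarrow> mv (\<lambda>y z. \<Sum>t\<in>S. c t * F t y z) f = (\<lambda>y. \<Sum>t\<in>S. c t * mv (F t) f y)"
proof
  fix y assume "finite S"
  have "mv (\<lambda>y z. \<Sum>t\<in>S. c t * F t y z) f y = (\<Sum>w\<in>X. \<Sum>t\<in>S. c t * F t y w * f w)"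
    unfolding mv_def by (simp add: sum_distrib_right)
  also have "\<dots> = (\<Sum>t\<in>S. \<Sum>w\<in>X. c t * F t y w * f w)" by (rule sum.swap)
  also have "\<dots> = (\<Sum>t\<in>S. c t * mv (F t) f y)" unfolding mv_def
    by (simp add: sum_distrib_left mult.assoc)
  finally show "mv (\<lambda>y z. \<Sum>t\<in>S. c t * F t y z) f y = (\<Sum>t\<in>S. c t * mv (F t) f y)" .
qed

lemma phi_sum: assumes "finite S"
  shows "phi (\<lambda>y z. \<Sum>t\<in>S. c t * F t y z) = (\<lambda>k i j. \<Sum>t\<in>S. c t * phi (F t) k i j)"
proof (intro ext)
  fix k i j show "phi (\<lambda>y z. \<Sum>t\<in>S. c t * F t y z) k i j = (\<Sum>t\<in>S. c t * phi (F t) k i j)"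
  proof (cases k)
    case None then show ?thesis
      by (cases "i \<le> d \<and> j \<le> d") (auto simp: phi_None mv_sum[OF assms])
  next
    case (Some C) then show ?thesis
      by (cases "C \<in> Cs \<and> i < card C \<and> j < card C") (auto simp: phi_Some mv_sum[OF assms])
  qed
qed

lemma mult_u: assumes "invT K" "j \<le> d"
  shows "mv (xmat_mult X M K) (u j) = (\<lambda>y. \<Sum>a\<le>d. mv K (u j) (rep a) * mv M (u a) y)"
proof -
  have w: "W0 (mv K (u j))" using assms unfolding invT_def by blast
  have "mv (xmat_mult X M K) (u j) = mv M (\<lambda>y. \<Sum>a\<le>d. mv K (u j) (rep a) * u a y)"
    unfolding mv_mult using W0_decomp[OF w] by simp
  also have "\<dots> = (\<lambda>y. \<Sum>a\<le>d. mv K (u j) (rep a) * mv M (u a) y)" by (rule mv_lin) simp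
  finally show ?thesis .
qed

lemma mult_v: assumes "invT K" "c \<in> A"
  shows "mv (xmat_mult X M K) (v c) = (\<lambda>y. \<Sum>e\<in>A. mv K (v c) (yA e) * mv M (v e) y)"
proof -
  have w: "W1 (mv K (v c))" using assms unfolding invT_def by blast
  have "mv (xmat_mult X M K) (v c) = mv M (\<lambda>y. \<Sum>e\<in>A. mv K (v c) (yA e) * v e y)"
    unfolding mv_mult using W1_decomp[OF w] by simp
  also have "\<dots> = (\<lambda>y. \<Sum>e\<in>A. mv K (v c) (yA e) * mv M (v e) y)" by (rule mv_lin) (rule finA)
  finally show ?thesis .
qed

lemma phi_mult: assumes "invT M" "invT K"
  shows "phi (xmat_mult X M K) = blocks_mult nn (phi M) (phi K)"
proof (intro ext)
  fix k i j
  show "phi (xmat_mult X M K) k i j = blocks_mult nn (phi M) (phi K) k i j"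
  proof (cases k)
    case None
    show ?thesis
    proof (cases "i \<le> d \<and> j \<le> d")
      case True
      have "phi (xmat_mult X M K) k i j = (\<Sum>a\<le>d. mv K (u j) (rep a) * mv M (u a) (rep i))"
        using None True by (simp add: phi_None mult_u[OF assms(2)])
      also have "\<dots> = (\<Sum>l<nn k. phi M k i l * phi K k l j)"
        unfolding None nn_def using True lessThan_Suc_atMost
        by (simp add: phi_None mult.commute)
      finally show ?thesis unfolding blocks_mult_def by simp
    next
      case False
      then have "\<forall>l. phi M k i l * phi K k l j = 0" using None by (auto simp: phi_None)
      then have "blocks_mult nn (phi M) (phi K) k i j = 0" unfolding blocks_mult_def by (intro sum.neutral) blast
      moreover have "phi (xmat_mult X M K) k i j = 0" using None False by (auto simp: phi_None)
      ultimately show ?thesis by simp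
    qed
  next
    case (Some C)
    show ?thesis
    proof (cases "C \<in> Cs \<and> i < card C \<and> j < card C")
      case True
      let ?c = "en C j" and ?a = "en C i"
      have cC: "?c \<in> C" "?a \<in> C" using en_in True by auto
      have CA: "C \<subseteq> A" using cls_sub True by blast
      have cA: "?c \<in> A" "?a \<in> A" using cC CA by auto
      have "phi (xmat_mult X M K) k i j = (\<Sum>e\<in>A. mv K (v ?c) (yA e) * mv M (v e) (yA ?a))"
        using Some True by (simp add: phi_Some mult_v[OF assms(2) cA(1)])
      also have "\<dots> = (\<Sum>e\<in>C. mv K (v ?c) (yA e) * mv M (v e) (yA ?a))"
      proof (rule sum.mono_neutral_right[OF finA CA])
        show "\<forall>e\<in>A - C. mv K (v ?c) (yA e) * mv M (v e) (yA ?a) = 0"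
        proof
          fix e assume e: "e \<in> A - C"
          have "\<not> conn e ?c"
          proof
            assume "conn e ?c"
            then have "e \<in> C" using cls_closed[OF _ cC(1)] conn_sym True by blast
            then show False using e by blast
          qed
          then show "mv K (v ?c) (yA e) * mv M (v e) (yA ?a) = 0"
            using assms(2) e cA unfolding invT_def by simp
        qed
      qed
      also have "\<dots> = (\<Sum>l<card C. mv K (v ?c) (yA (en C l)) * mv M (v (en C l)) (yA ?a))"
        using sum.reindex_bij_betw[OF en_bij, of C "\<lambda>e. mv K (v ?c) (yA e) * mv M (v e) (yA ?a)"] True
        by simp
      also have "\<dots> = (\<Sum>l<nn k. phi M k i l * phi K k l j)"
        unfolding Some nn_def using True by (intro sum.cong) (simp_all add: phi_Some mult.commute)
      finally show ?thesis unfolding blocks_mult_def by simp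
    next
      case False
      then have "\<forall>l. phi M k i l * phi K k l j = 0" using Some by (auto simp: phi_Some)
      then have "blocks_mult nn (phi M) (phi K) k i j = 0" unfolding blocks_mult_def by (intro sum.neutral) blast
      moreover have "phi (xmat_mult X M K) k i j = 0" using Some False by (auto simp: phi_Some)
      ultimately show ?thesis by simp
    qed
  qed
qed

lemma phi_one: "phi (xmat_one X :: ('a, 'f::field) xmat) = blocks_one II nn"
proof (intro ext)
  fix k i j
  show "phi (xmat_one X :: ('a, 'f) xmat) k i j = blocks_one II nn k i j"
  proof (cases k)
    case None
    show ?thesis
    proof (cases "i \<le> d \<and> j \<le> d")
      case True
      have r: "rep i \<in> N i" "rep i \<in> X" using rep_N N_sub True by auto
      have "phi (xmat_one X :: ('a, 'f) xmat) k i j = u j (rep i)"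
        using None True r by (simp add: phi_None mv_one)
      also have "\<dots> = (if j = i then 1 else 0)" using True by (simp add: u_at[OF _ _ r(1)])
      finally show ?thesis using None True unfolding blocks_one_def II_def nn_def by auto
    next
      case False
      then show ?thesis using None unfolding blocks_one_def II_def nn_def by (auto simp: phi_None)
    qed
  next
    case (Some C)
    show ?thesis
    proof (cases "C \<in> Cs \<and> i < card C \<and> j < card C")
      case True
      have cA: "en C j \<in> A" "en C i \<in> A" using en_in True cls_sub by blast+
      have "phi (xmat_one X :: ('a, 'f) xmat) k i j = v (en C j) (yA (en C i))"
        using Some True yAB_X[OF cA(2)] by (simp add: phi_Some mv_one)
      also have "\<dots> = (if i = j then 1 else 0)" using v_at[OF cA(2,1)] en_inj True by simp
      finally show ?thesis using Some True unfolding blocks_one_def II_def nn_def by auto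
    next
      case False
      then show ?thesis using Some unfolding blocks_one_def II_def nn_def by (auto simp: phi_Some)
    qed
  qed
qed

end


context qt
begin

abbreviation Gs where "Gs \<equiv> (\<lambda>a. adj_mat R a) ` {..d} \<union> (\<lambda>a. dual_idem R x a) ` {..d}"

lemma T_adj: "b \<le> d \<Longrightarrow> adj_mat R b \<in> terwilliger_alg X d R x"
  unfolding terwilliger_alg_def by (rule gen_alg.gen) blast
lemma T_E: "b \<le> d \<Longrightarrow> dual_idem R x b \<in> terwilliger_alg X d R x"
  unfolding terwilliger_alg_def by (rule gen_alg.gen) blast
lemma T_add: "M \<in> terwilliger_alg X d R x \<Longrightarrow> K \<in> terwilliger_alg X d R x \<Longrightarrow>
   (\<lambda>y z. M y z + K y z) \<in> terwilliger_alg X d R x"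
  unfolding terwilliger_alg_def by (rule gen_alg.add)
lemma T_smult: "M \<in> terwilliger_alg X d R x \<Longrightarrow> (\<lambda>y z. c * M y z) \<in> terwilliger_alg X d R x"
  unfolding terwilliger_alg_def by (rule gen_alg.smult)
lemma T_mult: "M \<in> terwilliger_alg X d R x \<Longrightarrow> K \<in> terwilliger_alg X d R x \<Longrightarrow>
   xmat_mult X M K \<in> terwilliger_alg X d R x"
  unfolding terwilliger_alg_def by (rule gen_alg.mult)
lemma T_zero: "(\<lambda>y z. 0) \<in> terwilliger_alg X d R x"
  unfolding terwilliger_alg_def by (rule gen_alg.zero)

lemma T_sum: assumes "finite S" "\<forall>t\<in>S. F t \<in> (terwilliger_alg X d R x :: ('a,'f::field) xmat set)"
  shows "(\<lambda>y z. \<Sum>t\<in>S. c t * F t y z) \<in> terwilliger_alg X d R x"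
  using assms
proof (induction S rule: finite_induct)
  case empty then show ?case using T_zero by simp
next
  case (insert t S)
  have "(\<lambda>y z. c t * F t y z) \<in> terwilliger_alg X d R x" using insert T_smult by blast
  moreover have "(\<lambda>y z. \<Sum>t\<in>S. c t * F t y z) \<in> terwilliger_alg X d R x" using insert by blast
  ultimately have "(\<lambda>y z. c t * F t y z + (\<Sum>t\<in>S. c t * F t y z)) \<in> terwilliger_alg X d R x"
    by (rule T_add)
  then show ?case using insert by simp
qed

lemma phi_zero_imp: fixes D :: "('a, 'f::field) xmat"
  assumes two: "(2::'f) \<noteq> 0" and D: "invT D" and z: "phi D = (\<lambda>k i j. 0)"
  shows "D = (\<lambda>y z. 0)"
proof -
  have U: "mv D (u j) = (\<lambda>y. 0)" if j: "j \<le> d" for j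
  proof -
    have w: "W0 (mv D (u j))" using D j unfolding invT_def by blast
    have "mv D (u j) (rep a) = 0" if "a \<le> d" for a
      using fun_cong[OF fun_cong[OF fun_cong[OF z, of None], of a], of j] that j by (simp add: phi_None)
    then show ?thesis using W0_decomp[OF w] by simp
  qed
  have V: "mv D (v c) = (\<lambda>y. 0)" if c: "c \<in> A" for c
  proof -
    have w: "W1 (mv D (v c))" using D c unfolding invT_def by blast
    have "mv D (v c) (yA e) = 0" if e: "e \<in> A" for e
    proof (cases "conn e c")
      case True
      define C where "C = {c'. conn c c'}"
      have C: "C \<in> Cs" "c \<in> C" "e \<in> C" unfolding C_def using cls_of c conn_refl conn_sym True by auto
      obtain i where i: "i < card C" "en C i = e" using en_surj[OF C(1,3)] by blast
      obtain j where j: "j < card C" "en C j = c" using en_surj[OF C(1,2)] by blast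
      show ?thesis using fun_cong[OF fun_cong[OF fun_cong[OF z, of "Some C"], of i], of j] C i j
        by (simp add: phi_Some)
    next
      case False
      then show ?thesis using D c e unfolding invT_def by blast
    qed
    then show ?thesis using W1_decomp[OF w] by simp
  qed
  show ?thesis
  proof (intro ext)
    fix y w
    show "D y w = 0"
    proof (cases "w \<in> X")
      case False
      then show ?thesis using D unfolding invT_def supp_def by blast
    next
      case True
      then obtain a where a: "a \<le> d" "w \<in> N a" by (rule part_of)
      show ?thesis
      proof (cases "a \<in> A")
        case False
        then have "card (N a) = 1" using card1_or2 a by blast
        then obtain z where "N a = {z}" using card_1_singletonE by blast
        then have Na: "N a = {w}" using a by simp
        have "mv D (u a) y = D y w" unfolding mv_u[OF a(1)] Na by simp
        then show ?thesis using U[OF a(1)] by simp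
      next
        case True
        have "mv D (u a) y = D y (yA a) + D y (yB a)" unfolding mv_u[OF a(1)] by (rule sum_N_A[OF True])
        then have 1: "D y (yA a) + D y (yB a) = 0" using U[OF a(1)] by simp
        have 2: "D y (yA a) - D y (yB a) = 0" using V[OF True] mv_v[OF True, of D y] by simp
        have "2 * D y (yA a) = 0" using 1 2 by (simp add: algebra_simps)
        then have A0: "D y (yA a) = 0" using two by simp
        then have B0: "D y (yB a) = 0" using 1 by simp
        have "w = yA a \<or> w = yB a" using yAB[OF True] a by blast
        then show ?thesis using A0 B0 by blast
      qed
    qed
  qed
qed

lemma phi_inj: assumes two: "(2::'f::field) \<noteq> 0"
  shows "inj_on phi (terwilliger_alg X d R x :: ('a,'f) xmat set)"
proof (rule inj_onI)
  fix M K :: "('a,'f) xmat"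
  assume M: "M \<in> terwilliger_alg X d R x" and K: "K \<in> terwilliger_alg X d R x" and e: "phi M = phi K"
  define D where "D = (\<lambda>y z. M y z + (-1) * K y z)"
  have DT: "D \<in> terwilliger_alg X d R x" unfolding D_def using T_add[OF M T_smult[OF K]] .
  have "phi D = (\<lambda>k i j. phi M k i j + phi (\<lambda>y z. (-1) * K y z) k i j)" unfolding D_def by (rule phi_add)
  also have "phi (\<lambda>y z. (-1) * K y z) = (\<lambda>k i j. (-1) * phi K k i j)" by (rule phi_smult)
  finally have "phi D = (\<lambda>k i j. phi M k i j + (-1) * phi K k i j)" by simp
  then have "phi D = (\<lambda>k i j. 0)" using e by simp
  then have D0: "D = (\<lambda>y z. 0)" using phi_zero_imp[OF two T_inv[OF DT]] by blast
  show "M = K"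
  proof (intro ext)
    fix y z
    have "M y z + (-1) * K y z = 0" using fun_cong[OF fun_cong[OF D0, of y], of z] unfolding D_def by simp
    then show "M y z = K y z" by simp
  qed
qed

end


context qt
begin

definition Jm :: "('a, 'f::field) xmat" where "Jm = (\<lambda>y z. \<Sum>b\<in>{..d}. 1 * adj_mat R b y z)"

lemma T_Jm: "(Jm :: ('a,'f::field) xmat) \<in> terwilliger_alg X d R x"
  unfolding Jm_def by (rule T_sum) (auto intro: T_adj)

lemma mv_J: assumes "y \<in> X" shows "mv (Jm :: ('a,'f::field) xmat) f y = (\<Sum>w\<in>X. f w)"
proof -
  have inner: "(\<Sum>b\<in>{..d}. 1 * adj_mat R b y w) = (1::'f)" if w: "w \<in> X" for w
  proof -
    obtain b0 where b0: "b0 \<le> d" "(y,w) \<in> R b0" using rel_ex[OF assms w] by blast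
    have "1 * adj_mat R b y w = (if b = b0 then (1::'f) else 0)" if b: "b \<in> {..d}" for b
    proof (cases "b = b0")
      case True then show ?thesis using b0 unfolding adj_mat_def by simp
    next
      case False
      then have "(y,w) \<notin> R b" using rel_uniq[of b b0 y w] b b0 by auto
      then show ?thesis using False unfolding adj_mat_def by simp
    qed
    then have "(\<Sum>b\<in>{..d}. 1 * adj_mat R b y w) = (\<Sum>b\<in>{..d}. if b = b0 then (1::'f) else 0)"
      by (rule sum.cong[OF refl])
    also have "\<dots> = 1" using b0 by simp
    finally show ?thesis .
  qed
  have "mv (Jm :: ('a,'f) xmat) f y = (\<Sum>w\<in>X. (\<Sum>b\<in>{..d}. 1 * adj_mat R b y w) * f w)"
    unfolding mv_def Jm_def by (rule refl)
  also have "\<dots> = (\<Sum>w\<in>X. f w)" using inner by (intro sum.cong[OF refl]) simp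
  finally show ?thesis .
qed

lemma mv_Ec: assumes "c \<le> d"
  shows "mv M (mv (dual_idem R x c) f) y = (\<Sum>w\<in>N c. M y w * (f w :: 'f::field))"
proof -
  have "mv M (mv (dual_idem R x c) f) y = (\<Sum>w\<in>X. M y w * (if w \<in> N c then f w else 0))"
    unfolding mv_def[of M] by (simp add: mv_E[OF assms])
  also have "\<dots> = (\<Sum>w\<in>N c. M y w * (if w \<in> N c then f w else 0))"
    using N_sub[OF assms] finX by (intro sum.mono_neutral_right) auto
  also have "\<dots> = (\<Sum>w\<in>N c. M y w * f w)" by simp
  finally show ?thesis .
qed

definition Q :: "nat \<Rightarrow> nat \<Rightarrow> ('a, 'f::field) xmat" where
  "Q i j = xmat_mult X (xmat_mult X (dual_idem R x i) Jm) (dual_idem R x j)"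

lemma T_Q: "i \<le> d \<Longrightarrow> j \<le> d \<Longrightarrow> (Q i j :: ('a,'f::field) xmat) \<in> terwilliger_alg X d R x"
  unfolding Q_def by (intro T_mult T_E T_Jm)

lemma mv_Q: assumes "i \<le> d" "j \<le> d"
  shows "mv (Q i j) f y = (if y \<in> N i then (\<Sum>w\<in>N j. (f w :: 'f::field)) else 0)"
proof (cases "y \<in> N i")
  case True
  then have yX: "y \<in> X" using N_sub assms by blast
  have "mv (Q i j) f y = mv Jm (mv (dual_idem R x j) f) y"
    unfolding Q_def mv_mult using True by (simp add: mv_E[OF assms(1)])
  also have "\<dots> = (\<Sum>w\<in>X. mv (dual_idem R x j) f w)" by (rule mv_J[OF yX])
  also have "\<dots> = (\<Sum>w\<in>X. if w \<in> N j then f w else 0)" by (simp add: mv_E[OF assms(2)])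
  also have "\<dots> = (\<Sum>w\<in>N j. if w \<in> N j then f w else 0)"
    using N_sub[OF assms(2)] finX by (intro sum.mono_neutral_right) auto
  also have "\<dots> = (\<Sum>w\<in>N j. f w)" by simp
  finally show ?thesis using True by simp
next
  case False
  then show ?thesis unfolding Q_def mv_mult by (simp add: mv_E[OF assms(1)])
qed

definition Ga :: "nat \<Rightarrow> nat \<Rightarrow> nat \<Rightarrow> ('a, 'f::field) xmat" where
  "Ga a b c = xmat_mult X (xmat_mult X (dual_idem R x a) (adj_mat R b)) (dual_idem R x c)"

lemma T_Ga: "a \<le> d \<Longrightarrow> b \<le> d \<Longrightarrow> c \<le> d \<Longrightarrow> (Ga a b c :: ('a,'f::field) xmat) \<in> terwilliger_alg X d R x"
  unfolding Ga_def by (intro T_mult T_E T_adj)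

lemma mv_Ga: assumes "a \<le> d" "c \<le> d"
  shows "mv (Ga a b c) f y = (if y \<in> N a then (\<Sum>w\<in>N c. (if (y,w) \<in> R b then 1 else 0) * (f w :: 'f::field)) else 0)"
proof -
  have "mv (Ga a b c) f y = mv (dual_idem R x a) (mv (adj_mat R b) (mv (dual_idem R x c) f)) y"
    unfolding Ga_def mv_mult by simp
  also have "\<dots> = (if y \<in> N a then mv (adj_mat R b) (mv (dual_idem R x c) f) y else 0)"
    by (rule mv_E[OF assms(1)])
  also have "\<dots> = (if y \<in> N a then (\<Sum>w\<in>N c. (if (y,w) \<in> R b then 1 else 0) * f w) else 0)"
    by (simp add: mv_Ec[OF assms(2)] adj_mat_def)
  finally show ?thesis .
qed

definition U0 :: "nat \<Rightarrow> nat \<Rightarrow> ('a, 'f::field) xmat" where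
  "U0 i j = (\<lambda>y z. (1 / of_nat (card (N j))) * Q i j y z)"

lemma cardN_nz: assumes "(2::'f::field) \<noteq> 0" "j \<le> d" shows "(of_nat (card (N j)) :: 'f) \<noteq> 0"
proof -
  have "card (N j) = 1 \<or> card (N j) = 2" using card1_or2[OF assms(2)] A2_card by blast
  then show ?thesis using assms(1) by auto
qed

lemma sum_u_N: assumes "j \<le> d" "l \<le> d" shows "(\<Sum>w\<in>N j. (u l w :: 'f::field)) = (if l = j then of_nat (card (N j)) else 0)"
proof -
  have "(\<Sum>w\<in>N j. (u l w :: 'f)) = (\<Sum>w\<in>N j. if l = j then 1 else 0)"
    by (intro sum.cong) (simp_all add: u_at[OF assms(1) assms(2)])
  then show ?thesis by simp
qed

lemma rep_in: assumes "i \<le> d" "i' \<le> d" shows "rep i' \<in> N i \<longleftrightarrow> i' = i"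
  using rep_N[OF assms(2)] N_disj[OF assms(2) assms(1)] rep_N[OF assms(1)] by blast

lemma phi_U0: assumes two: "(2::'f::field) \<noteq> 0" and ij: "i \<le> d" "j \<le> d"
  shows "phi (U0 i j :: ('a,'f) xmat) = (\<lambda>k i' j'. if k = None \<and> i' = i \<and> j' = j then 1 else 0)"
proof (intro ext)
  fix k i' j'
  have nz: "(of_nat (card (N j)) :: 'f) \<noteq> 0" using cardN_nz[OF two ij(2)] .
  have e: "phi (U0 i j :: ('a,'f) xmat) k i' j' = (1 / of_nat (card (N j))) * phi (Q i j :: ('a,'f) xmat) k i' j'"
    unfolding U0_def phi_smult by simp
  show "phi (U0 i j :: ('a,'f) xmat) k i' j' = (if k = None \<and> i' = i \<and> j' = j then 1 else 0)"
  proof (cases k)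
    case None
    show ?thesis
    proof (cases "i' \<le> d \<and> j' \<le> d")
      case True
      have "phi (Q i j :: ('a,'f) xmat) k i' j' = (if i' = i then (if j' = j then of_nat (card (N j)) else 0) else 0)"
        using None True by (simp add: phi_None mv_Q[OF ij] rep_in[OF ij(1)] sum_u_N[OF ij(2)])
      then show ?thesis using e nz None by auto
    next
      case False
      then show ?thesis using e None ij by (auto simp: phi_None)
    qed
  next
    case (Some C)
    show ?thesis
    proof (cases "C \<in> Cs \<and> i' < card C \<and> j' < card C")
      case True
      have "en C j' \<in> A" using en_in True cls_sub by blast
      then have "phi (Q i j :: ('a,'f) xmat) k i' j' = 0"
        using Some True by (simp add: phi_Some mv_Q[OF ij] v_sumN[OF _ ij(2)])
      then show ?thesis using e Some by simp
    next
      case False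
      then show ?thesis using e Some by (auto simp: phi_Some)
    qed
  qed
qed

definition isU :: "'f::field \<Rightarrow> nat \<Rightarrow> nat \<Rightarrow> ('a, 'f) xmat \<Rightarrow> bool" where
  "isU s a c M \<longleftrightarrow> M \<in> terwilliger_alg X d R x \<and> (\<forall>l\<le>d. mv M (u l) = (\<lambda>y. 0)) \<and>
     (\<forall>e\<in>A. mv M (v e) = (if e = c then (\<lambda>y. s * v a y) else (\<lambda>y. 0)))"

lemma isU_mult: assumes "isU s a c M" "isU t c e K" "c \<in> A" shows "isU (s * t) a e (xmat_mult X M K)"
proof -
  have T: "xmat_mult X M K \<in> terwilliger_alg X d R x" using assms(1,2) unfolding isU_def by (blast intro: T_mult)
  have "mv (xmat_mult X M K) (u l) = (\<lambda>y. 0)" if "l \<le> d" for l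
    using assms(1,2) that unfolding isU_def by (simp add: mv_mult mv_zero_f)
  moreover have "mv (xmat_mult X M K) (v e') = (if e' = e then (\<lambda>y. (s * t) * v a y) else (\<lambda>y. 0))"
    if e': "e' \<in> A" for e'
  proof (cases "e' = e")
    case True
    have cA: "c \<in> A" using assms(3) .
    have "mv (xmat_mult X M K) (v e') = mv M (\<lambda>y. t * v c y)" using assms(2) e' True unfolding isU_def by (simp add: mv_mult)
    also have "\<dots> = (\<lambda>y. t * mv M (v c) y)" by (rule mv_scal)
    also have "\<dots> = (\<lambda>y. (s * t) * v a y)" using assms(1) cA(1) unfolding isU_def by (simp add: mult_ac)
    finally show ?thesis using True by simp
  next
    case False
    then show ?thesis using assms(2) e' unfolding isU_def by (simp add: mv_mult mv_zero_f)
  qed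
  ultimately show ?thesis unfolding isU_def using T by blast
qed

end


context qt
begin

definition G :: "nat \<Rightarrow> nat \<Rightarrow> nat \<Rightarrow> ('a, 'f::field) xmat" where
  "G a b c = (\<lambda>y z. Ga a b c y z + (-1/2) * Q a c y z)"

lemma exactly_one: assumes "S = {p, q}" "p \<noteq> q" "card {z\<in>S. P z} = 1"
  shows "(P p \<and> \<not> P q) \<or> (\<not> P p \<and> P q)"
proof (rule ccontr)
  assume h: "\<not> ((P p \<and> \<not> P q) \<or> (\<not> P p \<and> P q))"
  show False
  proof (cases "P p")
    case True
    then have "P q" using h by blast
    then have "{z\<in>S. P z} = {p, q}" using True assms(1) by blast
    then show False using assms(2,3) by simp
  next
    case False
    then have "\<not> P q" using h by blast
    then have "{z\<in>S. P z} = {}" using False assms(1) by blast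
    then show False using assms(3) by (metis card.empty zero_neq_one)
  qed
qed

lemma G_unit: assumes two: "(2::'f::field) \<noteq> 0" and ac: "a \<in> A" "c \<in> A" and b: "b \<le> d"
  and one: "int_num X R a b c = 1"
  shows "\<exists>s. s \<noteq> 0 \<and> isU s a c (G a b c :: ('a,'f) xmat)"
proof -
  have ad: "a \<le> d" and cd: "c \<le> d" using ac A2_le by auto
  let ?P11 = "(yA a, yA c) \<in> R b" and ?P12 = "(yA a, yB c) \<in> R b"
  let ?P21 = "(yB a, yA c) \<in> R b" and ?P22 = "(yB a, yB c) \<in> R b"
  have "card {z\<in>N c. (yA a, z) \<in> R b} = 1" using rowA[OF ac b yA_N[OF ac(1)]] one by simp
  then have x1: "(?P11 \<and> \<not> ?P12) \<or> (\<not> ?P11 \<and> ?P12)" using exactly_one[OF yAB(1)[OF ac(2)] yAB(2)[OF ac(2)], of "\<lambda>z. (yA a, z) \<in> R b"] by blast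
  have "card {y\<in>N a. (y, yA c) \<in> R b} = 1" using colA[OF ac b yA_N[OF ac(2)]] one by simp
  then have x2: "(?P11 \<and> \<not> ?P21) \<or> (\<not> ?P11 \<and> ?P21)"
    using exactly_one[OF yAB(1)[OF ac(1)] yAB(2)[OF ac(1)], of "\<lambda>y. (y, yA c) \<in> R b"] by blast
  have "card {y\<in>N a. (y, yB c) \<in> R b} = 1" using colA[OF ac b yB_N[OF ac(2)]] one by simp
  then have x3: "(?P12 \<and> \<not> ?P22) \<or> (\<not> ?P12 \<and> ?P22)"
    using exactly_one[OF yAB(1)[OF ac(1)] yAB(2)[OF ac(1)], of "\<lambda>y. (y, yB c) \<in> R b"] by blast
  define \<sigma> :: "'a \<Rightarrow> 'f" where "\<sigma> y = (if (y, yA c) \<in> R b then 1 else 0) - (if (y, yB c) \<in> R b then 1 else 0)" for y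
  define s where "s = \<sigma> (yA a)"
  have s0: "s \<noteq> 0" using x1 unfolding s_def \<sigma>_def by auto
  have sB: "\<sigma> (yB a) = - s" using x1 x2 x3 unfolding s_def \<sigma>_def by auto
  have T: "(G a b c :: ('a,'f) xmat) \<in> terwilliger_alg X d R x"
    unfolding G_def by (intro T_add T_smult T_Ga T_Q ad cd b)
  have mvG: "mv (G a b c :: ('a,'f) xmat) f y = mv (Ga a b c) f y + (-1/2) * mv (Q a c) f y" for f y
    unfolding G_def mv_add mv_smult by simp
  have U: "mv (G a b c :: ('a,'f) xmat) (u l) = (\<lambda>y. 0)" if l: "l \<le> d" for l
  proof
    fix y
    show "mv (G a b c :: ('a,'f) xmat) (u l) y = 0"
    proof (cases "y \<in> N a")
      case False then show ?thesis unfolding mvG by (simp add: mv_Ga[OF ad cd] mv_Q[OF ad cd])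
    next
      case True
      have ul: "u l w = (if l = c then 1 else (0::'f))" if "w \<in> N c" for w
        using u_at[OF cd l that] by simp
      have "(\<Sum>w\<in>N c. (if (y,w) \<in> R b then 1 else 0) * (u l w :: 'f))
          = (\<Sum>w\<in>N c. if l = c then (if (y,w) \<in> R b then 1 else 0) else 0)"
        using ul by (intro sum.cong) auto
      also have "\<dots> = (if l = c then 1 else 0)"
      proof (cases "l = c")
        case True
        have "(\<Sum>w\<in>N c. if (y,w) \<in> R b then 1 else (0::'f)) = of_nat (card {w\<in>N c. (y,w) \<in> R b})"
          using finN[OF cd] by (rule sum_if_card)
        also have "\<dots> = 1" using rowA[OF ac b \<open>y \<in> N a\<close>] one by simp
        finally show ?thesis using True by simp
      qed simp
      finally have g: "mv (Ga a b c) (u l) y = (if l = c then 1 else (0::'f))"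
        using True by (simp add: mv_Ga[OF ad cd])
      have q: "mv (Q a c) (u l) y = (if l = c then 2 else (0::'f))"
        using True A2_card[OF ac(2)] by (simp add: mv_Q[OF ad cd] sum_u_N[OF cd l])
      show ?thesis unfolding mvG g q using two by simp
    qed
  qed
  have V: "mv (G a b c :: ('a,'f) xmat) (v e) = (if e = c then (\<lambda>y. s * v a y) else (\<lambda>y. 0))"
    if e: "e \<in> A" for e
  proof (cases "e = c")
    case False
    have vz: "v e w = (0::'f)" if "w \<in> N c" for w
    proof -
      have "w \<notin> N e" using N_disj[OF cd A2_le[OF e] that] False by blast
      then show ?thesis by (simp add: v_out[OF e])
    qed
    have "mv (G a b c :: ('a,'f) xmat) (v e) y = 0" for y
      unfolding mvG using vz by (simp add: mv_Ga[OF ad cd] mv_Q[OF ad cd])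
    then show ?thesis using False by auto
  next
    case True
    have "mv (G a b c :: ('a,'f) xmat) (v c) y = s * v a y" for y
    proof (cases "y \<in> N a")
      case False
      then show ?thesis unfolding mvG by (simp add: mv_Ga[OF ad cd] mv_Q[OF ad cd] v_out[OF ac(1) False])
    next
      case yN: True
      have q: "mv (Q a c) (v c) y = (0::'f)" using yN by (simp add: mv_Q[OF ad cd] v_sumN[OF ac(2) cd])
      have "(\<Sum>w\<in>N c. (if (y,w) \<in> R b then 1 else 0) * (v c w :: 'f))
         = (if (y,yA c) \<in> R b then 1 else 0) * v c (yA c) + (if (y,yB c) \<in> R b then 1 else 0) * v c (yB c)"
        by (rule sum_N_A[OF ac(2)])
      also have "\<dots> = \<sigma> y" unfolding \<sigma>_def by (simp add: v_yA[OF ac(2)] v_yB[OF ac(2)])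
      finally have g: "mv (Ga a b c) (v c) y = \<sigma> y" using yN by (simp add: mv_Ga[OF ad cd])
      have "y = yA a \<or> y = yB a" using yAB[OF ac(1)] yN by blast
      then have "\<sigma> y = s * v a y"
      proof
        assume "y = yA a" then show ?thesis unfolding s_def by (simp add: v_yA[OF ac(1)])
      next
        assume "y = yB a" then show ?thesis using sB by (simp add: v_yB[OF ac(1)])
      qed
      then show ?thesis unfolding mvG g q by simp
    qed
    then show ?thesis using True by auto
  qed
  show ?thesis unfolding isU_def using s0 T U V by blast
qed

lemma conn_unit: assumes two: "(2::'f::field) \<noteq> 0" and cn: "conn a c"
  shows "\<exists>s (M :: ('a,'f) xmat). s \<noteq> 0 \<and> isU s a c M"
proof -
  have "(a,c) \<in> Ed\<^sup>*" "a \<in> A" using cn unfolding conn_def by auto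
  then show ?thesis
  proof (induction rule: rtrancl_induct)
    case base
    obtain j where "j \<le> d" "int_num X R a j a = 1" using edge_refl[OF base] unfolding edge_def by blast
    then show ?case using G_unit[OF two base base] by blast
  next
    case (step c e)
    obtain s M where sM: "s \<noteq> 0" "isU s a c (M :: ('a,'f) xmat)" using step by blast
    obtain j where j: "j \<le> d" "int_num X R c j e = 1" "c \<in> A" "e \<in> A" using step(2) unfolding Ed_def edge_def by blast
    obtain t K where tK: "t \<noteq> 0" "isU t c e (K :: ('a,'f) xmat)" using G_unit[OF two j(3,4,1,2)] by blast
    have "isU (s * t) a e (xmat_mult X M K)" using isU_mult[OF sM(2) tK(2) j(3)] .
    moreover have "s * t \<noteq> 0" using sM tK by simp
    ultimately show ?case by blast
  qed
qed

lemma isU_norm: assumes U: "isU s a c M" and s: "s \<noteq> 0" shows "isU 1 a c (\<lambda>y z. (1/s) * M y z)"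
proof -
  have e: "mv (\<lambda>y z. (1/s) * M y z) f = (\<lambda>y. (1/s) * mv M f y)" for f by (rule mv_smult)
  have T: "(\<lambda>y z. (1/s) * M y z) \<in> terwilliger_alg X d R x" using U unfolding isU_def by (blast intro: T_smult)
  show ?thesis unfolding isU_def e using T U s unfolding isU_def by auto
qed

lemma phi_isU: assumes U: "isU 1 a c (M :: ('a,'f::field) xmat)" and C: "C \<in> Cs" and ij: "i < card C" "j < card C"
  and ea: "en C i = a" and ec: "en C j = c"
  shows "phi M = (\<lambda>k i' j'. if k = Some C \<and> i' = i \<and> j' = j then 1 else 0)"
proof (intro ext)
  fix k i' j'
  have aA: "a \<in> A" using en_in[OF C ij(1)] ea cls_sub[OF C] by blast
  show "phi M k i' j' = (if k = Some C \<and> i' = i \<and> j' = j then 1 else 0)"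
  proof (cases k)
    case None
    then show ?thesis using U unfolding isU_def by (auto simp: phi_None)
  next
    case (Some C')
    show ?thesis
    proof (cases "C' \<in> Cs \<and> i' < card C' \<and> j' < card C'")
      case True
      have e1: "en C' j' \<in> A" "en C' i' \<in> A" using en_in True cls_sub by blast+
      have "phi M k i' j' = (if en C' j' = c then v a (yA (en C' i')) else 0)"
        using Some True U e1 unfolding isU_def by (simp add: phi_Some)
      also have "\<dots> = (if en C' j' = c \<and> en C' i' = a then 1 else 0)"
        using v_at[OF e1(2) aA] by auto
      also have "(en C' j' = c \<and> en C' i' = a) \<longleftrightarrow> (C' = C \<and> i' = i \<and> j' = j)"
      proof
        assume h: "en C' j' = c \<and> en C' i' = a"
        have "en C' j' \<in> C'" "en C j \<in> C" using en_in True C ij by blast+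
        then have "c \<in> C'" "c \<in> C" using h ec by auto
        then have CC: "C' = C" using cls_uniq True C by blast
        then show "C' = C \<and> i' = i \<and> j' = j" using h ea ec en_inj[OF C] True ij by auto
      next
        assume "C' = C \<and> i' = i \<and> j' = j"
        then show "en C' j' = c \<and> en C' i' = a" using ea ec by auto
      qed
      finally show ?thesis using Some by simp
    next
      case False
      then show ?thesis using Some C ij by (auto simp: phi_Some)
    qed
  qed
qed

lemma finCs: "finite Cs"
  using finite_quotient[OF finA] equiv_sim unfolding equiv_def by blast

lemma phi_surj: assumes two: "(2::'f::field) \<noteq> 0"
  shows "blocks_carrier II nn \<subseteq> phi ` (terwilliger_alg X d R x :: ('a,'f) xmat set)"
proof
  fix B :: "nat set option \<Rightarrow> nat \<Rightarrow> nat \<Rightarrow> 'f"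
  assume B: "B \<in> blocks_carrier II nn"
  define F where "F = {(k,i,j). k \<in> II \<and> i < nn k \<and> j < nn k}"
  define m where "m = d + 1 + card A"
  have nnm: "nn k < m + 1" if "k \<in> II" for k
  proof (cases k)
    case None then show ?thesis unfolding nn_def m_def by simp
  next
    case (Some C)
    then have "C \<in> Cs" using that unfolding II_def by auto
    then have "card C \<le> card A" using cls_sub finA by (intro card_mono) auto
    then show ?thesis using Some unfolding nn_def m_def by simp
  qed
  have finII: "finite II" unfolding II_def using finCs by simp
  have "F \<subseteq> II \<times> ({..<m+1} \<times> {..<m+1})" unfolding F_def using nnm by fastforce
  then have finF: "finite F" using finII finite_subset by blast
  define \<delta> :: "nat set option \<times> nat \<times> nat \<Rightarrow> nat set option \<Rightarrow> nat \<Rightarrow> nat \<Rightarrow> 'f"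
    where "\<delta> t = (\<lambda>k i j. if (k,i,j) = t then 1 else 0)" for t
  have ex: "\<exists>U\<in>(terwilliger_alg X d R x :: ('a,'f) xmat set). phi U = \<delta> t" if t: "t \<in> F" for t
  proof -
    obtain k i j where kij: "t = (k,i,j)" by (cases t) auto
    have h: "k \<in> II" "i < nn k" "j < nn k" using t kij unfolding F_def by auto
    show ?thesis
    proof (cases k)
      case None
      then have ij: "i \<le> d" "j \<le> d" using h unfolding nn_def by auto
      have "(U0 i j :: ('a,'f) xmat) \<in> terwilliger_alg X d R x" unfolding U0_def using T_Q[OF ij] by (rule T_smult)
      moreover have "phi (U0 i j :: ('a,'f) xmat) = \<delta> t" unfolding phi_U0[OF two ij] \<delta>_def kij None by auto
      ultimately show ?thesis by blast
    next
      case (Some C)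
      then have C: "C \<in> Cs" "i < card C" "j < card C" using h unfolding II_def nn_def by auto
      have "conn (en C i) (en C j)" using cls_conn[OF C(1) en_in[OF C(1,2)] en_in[OF C(1,3)]] .
      then obtain s M where sM: "s \<noteq> 0" "isU s (en C i) (en C j) (M :: ('a,'f) xmat)" using conn_unit[OF two] by blast
      have U: "isU 1 (en C i) (en C j) (\<lambda>y z. (1/s) * M y z)" using isU_norm[OF sM(2,1)] .
      then have "(\<lambda>y z. (1/s) * M y z) \<in> terwilliger_alg X d R x" unfolding isU_def by blast
      moreover have "phi (\<lambda>y z. (1/s) * M y z) = \<delta> t" unfolding phi_isU[OF U C refl refl] \<delta>_def kij Some by auto
      ultimately show ?thesis by blast
    qed
  qed
  define Ut where "Ut t = (SOME U. U \<in> (terwilliger_alg X d R x :: ('a,'f) xmat set) \<and> phi U = \<delta> t)" for t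
  have Ut: "Ut t \<in> terwilliger_alg X d R x \<and> phi (Ut t) = \<delta> t" if "t \<in> F" for t
    unfolding Ut_def using ex[OF that] by (rule someI2_bex) blast
  define Bt where "Bt t = B (fst t) (fst (snd t)) (snd (snd t))" for t
  define M where "M = (\<lambda>y z. \<Sum>t\<in>F. Bt t * Ut t y z)"
  have MT: "M \<in> terwilliger_alg X d R x" unfolding M_def using finF Ut by (intro T_sum) auto
  have "phi M = (\<lambda>k i j. \<Sum>t\<in>F. Bt t * phi (Ut t) k i j)" unfolding M_def by (rule phi_sum[OF finF])
  also have "\<dots> = B"
  proof (intro ext)
    fix k i j
    have "(\<Sum>t\<in>F. Bt t * phi (Ut t) k i j) = (\<Sum>t\<in>F. if t = (k,i,j) then Bt (k,i,j) else 0)"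
      using Ut unfolding \<delta>_def by (intro sum.cong) auto
    also have "\<dots> = (if (k,i,j) \<in> F then Bt (k,i,j) else 0)" using finF by simp
    also have "\<dots> = B k i j"
      using B unfolding blocks_carrier_def F_def Bt_def by auto
    finally show "(\<Sum>t\<in>F. Bt t * phi (Ut t) k i j) = B k i j" .
  qed
  finally show "B \<in> phi ` terwilliger_alg X d R x" using MT by blast
qed

end


theorem corollary7p16:
  fixes X :: "'a set" and d :: nat and R :: "nat \<Rightarrow> ('a \<times> 'a) set" and x :: 'a
  assumes "alg_closed_field TYPE('f::field)"
    and "(2::'f) \<noteq> 0"
    and "is_scheme X d R"
    and "quasi_thin X d R"
    and "A2 X d R \<noteq> {}"
    and "x \<in> X"
  shows "equiv (A2 X d R) (sim_rel X d R) \<and>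
    (let I = insert None (Some ` (A2 X d R // sim_rel X d R));
         n = (\<lambda>k. case k of None \<Rightarrow> d + 1 | Some C \<Rightarrow> card C)
     in \<exists>\<phi>. alg_iso X (terwilliger_alg X d R x :: ('a, 'f) xmat set) I n \<phi>)"
proof -
  interpret q: qt X d R x using assms(3,4,6) by unfold_locales
  have eq: "equiv (A2 X d R) (sim_rel X d R)" by (rule q.equiv_sim)
  have nn: "(\<lambda>k. case k of None \<Rightarrow> d + 1 | Some C \<Rightarrow> card C) = q.nn"
    by (rule ext) (simp add: q.nn_def)
  have II: "insert None (Some ` (A2 X d R // sim_rel X d R)) = q.II" unfolding q.II_def by simp
  have iso: "alg_iso X (terwilliger_alg X d R x :: ('a,'f) xmat set) q.II q.nn q.phi"
    unfolding alg_iso_def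
  proof (intro conjI ballI allI)
    have "inj_on q.phi (terwilliger_alg X d R x :: ('a,'f) xmat set)" by (rule q.phi_inj[OF assms(2)])
    moreover have "q.phi ` (terwilliger_alg X d R x :: ('a,'f) xmat set) = blocks_carrier q.II q.nn"
      using q.phi_carrier q.phi_surj[OF assms(2)] by blast
    ultimately show "bij_betw q.phi (terwilliger_alg X d R x :: ('a,'f) xmat set) (blocks_carrier q.II q.nn)"
      unfolding bij_betw_def by blast
  next
    fix M K :: "('a,'f) xmat"
    show "q.phi (\<lambda>y z. M y z + K y z) = (\<lambda>k i j. q.phi M k i j + q.phi K k i j)" by (rule q.phi_add)
  next
    fix M :: "('a,'f) xmat" and c :: 'f
    show "q.phi (\<lambda>y z. c * M y z) = (\<lambda>k i j. c * q.phi M k i j)" by (rule q.phi_smult)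
  next
    fix M K :: "('a,'f) xmat"
    assume "M \<in> terwilliger_alg X d R x" "K \<in> terwilliger_alg X d R x"
    then show "q.phi (xmat_mult X M K) = blocks_mult q.nn (q.phi M) (q.phi K)"
      using q.phi_mult q.T_inv by blast
  next
    show "q.phi (xmat_one X :: ('a,'f) xmat) = blocks_one q.II q.nn" by (rule q.phi_one)
  qed
  show ?thesis using eq iso unfolding Let_def II nn by blast
qed


end
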